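(* Let $k$, $\varphi$, $b$ and $\mathbf V(s)$ be as in the context and let $(T,D_t)$ be the trivial differential module of rank $1$. Then the columns of $\mathbf V(s)$ form a basis of the space of horizontal elements at $b$ of the direct image $(T_\varphi,D_s)$ (in coordinates with respect to the basis $e,te,\dots,t^{d-1}e$).
   Context: $k$ is an algebraically closed field complete for a non-archimedean absolute value extending the $p$-adic one. ${\mathscr D}_t^\pm$ is the unit disc (open or closed) with analytic functions $\mathcal O_t^\pm$; $\mathcal O_s(b,r^-)$ is the ring of power series in $s-b$ converging on $|s-b|<r$. $\varphi:{\mathscr D}_t^\pm\to{\mathscr D}_s^\pm$ is a finite étale morphism of degree $d$ of unit discs given by $s=f(t)$; $P(s,X)$ is the unique monic degree-$d$ polynomial over $\mathcal O_s^\pm$ with $P(f(t),t)=0$. Fix $b\in{\mathscr D}_s^\pm(k)$, $\varphi^{-1}(b)=\{a_1,\dots,a_d\}$; $u_{a_i}(s)\in k[[s-b]]$ is the root of $P(s,X)$ with constant term $a_i$; $\mathbf V(s)$ is the inverse of the $d\times d$ matrix $(u_{a_i}(s)^{j-1})_{i,j}$. The trivial module is $T=\mathcal O_t^\pm e$ with $D_t(ge)=\frac{dg}{dt}e$; its direct image $(T_\varphi,D_s)$ is $T$ viewed as $\mathcal O_s^\pm$-module via $s=f(t)$ with $D_s=\frac1{f'(t)}D_t$, free with basis $e,te,\dots,t^{d-1}e$. A horizontal element at $b$ is an element of $\ker D_s$ on $T_\varphi\otimes\mathcal O_s(b,r^-)$ for some $r>0$, identified with its coordinate vector in $k[[s-b]]^d$.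 *)

theory Defs
  imports "HOL-Computational_Algebra.Formal_Power_Series"
          "HOL-Computational_Algebra.Polynomial"
          "HOL-Computational_Algebra.Primes"
begin

definition is_nonarch_abs :: "('k::field \<Rightarrow> real) \<Rightarrow> bool" where
  "is_nonarch_abs av \<longleftrightarrow>
     (\<forall>x. 0 \<le> av x) \<and> (\<forall>x. av x = 0 \<longleftrightarrow> x = 0) \<and>
     (\<forall>x y. av (x * y) = av x * av y) \<and>
     (\<forall>x y. av (x + y) \<le> max (av x) (av y))"

definition kconv :: "('k::field \<Rightarrow> real) \<Rightarrow> (nat \<Rightarrow> 'k) \<Rightarrow> 'k \<Rightarrow> bool" where
  "kconv av X L \<longleftrightarrow> (\<forall>e>0. \<exists>N. \<forall>n\<ge>N. av (X n - L) < e)"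

definition kcauchy :: "('k::field \<Rightarrow> real) \<Rightarrow> (nat \<Rightarrow> 'k) \<Rightarrow> bool" where
  "kcauchy av X \<longleftrightarrow> (\<forall>e>0. \<exists>N. \<forall>m\<ge>N. \<forall>n\<ge>N. av (X m - X n) < e)"

definition nonarch_field :: "('k::field \<Rightarrow> real) \<Rightarrow> bool" where
  "nonarch_field av \<longleftrightarrow>
     is_nonarch_abs av \<and>
     (\<exists>p::nat. prime p \<and> av (of_nat p) = 1 / real p) \<and>
     (\<forall>X. kcauchy av X \<longrightarrow> (\<exists>L. kconv av X L)) \<and>
     (\<forall>q::'k poly. 0 < degree q \<longrightarrow> (\<exists>x. poly q x = 0))"

definition ksum :: "('k::field \<Rightarrow> real) \<Rightarrow> (nat \<Rightarrow> 'k) \<Rightarrow> 'k" where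
  "ksum av x = (THE S. kconv av (\<lambda>n. \<Sum>i<n. x i) S)"

definition ev :: "('k::field \<Rightarrow> real) \<Rightarrow> 'k fps \<Rightarrow> 'k \<Rightarrow> 'k" where
  "ev av a z = ksum av (\<lambda>n. fps_nth a n * z ^ n)"

definition conv_rad :: "('k::field \<Rightarrow> real) \<Rightarrow> 'k fps \<Rightarrow> real \<Rightarrow> bool" where
  "conv_rad av a r \<longleftrightarrow> (\<forall>\<rho>. 0 \<le> \<rho> \<and> \<rho> < r \<longrightarrow> (\<lambda>n. av (fps_nth a n) * \<rho> ^ n) \<longlonglongrightarrow> 0)"

text \<open>cl = True: closed unit disc (Tate algebra); cl = False: open unit disc.\<close>
definition udisc :: "('k::field \<Rightarrow> real) \<Rightarrow> bool \<Rightarrow> 'k set" where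
  "udisc av cl = {x. if cl then av x \<le> 1 else av x < 1}"

definition Odisc :: "('k::field \<Rightarrow> real) \<Rightarrow> bool \<Rightarrow> 'k fps set" where
  "Odisc av cl = {a. if cl then (\<lambda>n. av (fps_nth a n)) \<longlonglongrightarrow> 0 else conv_rad av a 1}"

text \<open>Taylor expansion at b of a power series in s: an element of k[[s-b]],
  represented as a formal power series in the variable (s - b).\<close>
definition expand_at :: "('k::field \<Rightarrow> real) \<Rightarrow> 'k fps \<Rightarrow> 'k \<Rightarrow> 'k fps" where
  "expand_at av h b = Abs_fps (\<lambda>n. ksum av (\<lambda>m. of_nat (m choose n) * fps_nth h m * b ^ (m - n)))"

text \<open>s = f(t) defines a finite etale morphism of degree d of unit discs:
  f is analytic, maps the disc to the disc, O_t is free over O_s (via s = f(t))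
  with basis 1, t, ..., t^(d-1), and f' is a unit of O_t.\<close>
definition finite_etale :: "('k::field \<Rightarrow> real) \<Rightarrow> bool \<Rightarrow> 'k fps \<Rightarrow> nat \<Rightarrow> bool" where
  "finite_etale av cl f d \<longleftrightarrow>
     f \<in> Odisc av cl \<and>
     (\<forall>x\<in>udisc av cl. ev av f x \<in> udisc av cl) \<and>
     (\<forall>h\<in>Odisc av cl. \<exists>!c::nat \<Rightarrow> 'k fps.
          (\<forall>j<d. c j \<in> Odisc av cl) \<and> (\<forall>j\<ge>d. c j = 0) \<and>
          (\<forall>x\<in>udisc av cl. ev av h x = (\<Sum>j<d. ev av (c j) (ev av f x) * x ^ j))) \<and>
     (\<exists>g\<in>Odisc av cl. \<forall>x\<in>udisc av cl. ev av (fps_deriv f) x * ev av g x = 1)"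

text \<open>P(s,X) = X^d + sum_{m<d} P_m(s) X^m is the monic polynomial with P(f(t),t) = 0.\<close>
definition is_min_poly :: "('k::field \<Rightarrow> real) \<Rightarrow> bool \<Rightarrow> 'k fps \<Rightarrow> nat \<Rightarrow> (nat \<Rightarrow> 'k fps) \<Rightarrow> bool" where
  "is_min_poly av cl f d P \<longleftrightarrow>
     (\<forall>m<d. P m \<in> Odisc av cl) \<and>
     (\<forall>x\<in>udisc av cl. (\<Sum>m<d. ev av (P m) (ev av f x) * x ^ m) + x ^ d = 0)"

text \<open>Matrix of the connection D_s = (1/f') D_t of the direct image T_phi in the basis
  e, te, ..., t^(d-1) e:  D_s(t^j e) = sum_m C j m (s) t^m e.\<close>
definition is_conn_matrix :: "('k::field \<Rightarrow> real) \<Rightarrow> bool \<Rightarrow> 'k fps \<Rightarrow> nat \<Rightarrow> (nat \<Rightarrow> nat \<Rightarrow> 'k fps) \<Rightarrow> bool" where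
  "is_conn_matrix av cl f d C \<longleftrightarrow>
     (\<forall>j<d. \<forall>m<d. C j m \<in> Odisc av cl) \<and>
     (\<forall>j<d. \<forall>x\<in>udisc av cl.
        ev av (fps_deriv f) x * (\<Sum>m<d. ev av (C j m) (ev av f x) * x ^ m) = of_nat j * x ^ (j - 1))"

text \<open>Horizontal element at b: y = sum_j y_j(s) t^j e with y_j in O_s(b, r^-) for some
  r > 0 (coordinates as series in s - b) and D_s y = 0.\<close>
definition horizontal :: "('k::field \<Rightarrow> real) \<Rightarrow> nat \<Rightarrow> 'k \<Rightarrow> (nat \<Rightarrow> nat \<Rightarrow> 'k fps) \<Rightarrow> (nat \<Rightarrow> 'k fps) \<Rightarrow> bool" where
  "horizontal av d b C y \<longleftrightarrow>
     (\<exists>r>0. \<forall>j<d. conv_rad av (y j) r) \<and>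
     (\<forall>m<d. fps_deriv (y m) + (\<Sum>j<d. y j * expand_at av (C j m) b) = 0)"

end

theory Submission
  imports Defs
begin

unbundle fps_syntax

locale nak =
  fixes av :: "'k::field \<Rightarrow> real"
  assumes isna: "is_nonarch_abs av"
    and compl: "\<forall>X. kcauchy av X \<longrightarrow> (\<exists>L. kconv av X L)"
begin

lemma av_nonneg[simp]: "0 \<le> av x" using isna by (simp add: is_nonarch_abs_def)
lemma av_eq_0[simp]: "av x = 0 \<longleftrightarrow> x = 0" using isna by (simp add: is_nonarch_abs_def)
lemma av_mult: "av (x * y) = av x * av y" using isna by (simp add: is_nonarch_abs_def)
lemma av_ultra: "av (x + y) \<le> max (av x) (av y)" using isna by (simp add: is_nonarch_abs_def)
lemma av_0[simp]: "av 0 = 0" by simp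
lemma av_pos: "x \<noteq> 0 \<Longrightarrow> 0 < av x" using av_nonneg[of x] av_eq_0[of x] by linarith
lemma av_1[simp]: "av 1 = 1"
proof -
  have "av 1 = av 1 * av 1" using av_mult[of 1 1] by simp
  moreover have "av 1 \<noteq> 0" by simp
  ultimately show ?thesis by (metis mult_cancel_left1)
qed
lemma av_minus[simp]: "av (- x) = av x"
proof -
  have "av (-1) * av (-1) = 1" using av_mult[of "-1" "-1"] by simp
  hence "av (-1) = 1" using av_nonneg[of "-1"]
    by (metis abs_of_nonneg abs_square_eq_1 power2_eq_square)
  thus ?thesis using av_mult[of "-1" x] by simp
qed
lemma av_commute: "av (x - y) = av (y - x)" by (metis av_minus minus_diff_eq)
lemma av_diff: "av (x - y) \<le> max (av x) (av y)" using av_ultra[of x "-y"] by simp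
lemma av_power: "av (x ^ n) = av x ^ n" by (induct n) (auto simp: av_mult)
lemma av_inverse: "av (inverse x) = inverse (av x)"
proof (cases "x = 0")
  case False
  hence "av x * av (inverse x) = 1" by (metis av_1 av_mult right_inverse)
  thus ?thesis by (rule sym[OF inverse_unique])
qed simp
lemma av_divide: "av (x / y) = av x / av y"
  by (simp add: divide_inverse av_mult av_inverse)
lemma av_of_nat_le: "av (of_nat n) \<le> 1"
proof (induct n)
  case (Suc n) thus ?case using av_ultra[of 1 "of_nat n"] by (simp add: add.commute)
qed simp
lemma av_of_int_le: "av (of_int n) \<le> 1"
proof (cases n rule: int_cases)
  case (nonneg m) thus ?thesis using av_of_nat_le[of m] by simp
next
  case (neg m) thus ?thesis using av_of_nat_le[of "Suc m"] by (simp del: of_nat_Suc)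
qed
lemma av_sum_le: "0 \<le> B \<Longrightarrow> (\<And>i. i \<in> A \<Longrightarrow> av (g i) \<le> B) \<Longrightarrow> av (sum g A) \<le> B"
proof (induct A rule: infinite_finite_induct)
  case (insert x F)
  thus ?case by (simp, intro order_trans[OF av_ultra max.boundedI]) auto
qed auto
lemma av_add_strict: "av y < av x \<Longrightarrow> av (x + y) = av x"
proof -
  assume a: "av y < av x"
  have "av (x + y) \<le> av x" using av_ultra[of x y] a by simp
  moreover have "av x \<le> max (av (x + y)) (av y)" using av_ultra[of "x+y" "-y"] by simp
  ultimately show ?thesis using a by linarith
qed
lemma av_lip: "\<bar>av x - av y\<bar> \<le> av (x - y)"
proof -
  have "av x \<le> max (av (x - y)) (av y)" using av_ultra[of "x-y" y] by simp
  moreover have "av y \<le> max (av (y - x)) (av x)" using av_ultra[of "y-x" x] by simp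
  ultimately show ?thesis using av_commute[of x y] av_nonneg[of "x - y"] av_nonneg[of x] av_nonneg[of y] unfolding le_max_iff_disj abs_le_iff by (smt (verit))
qed

lemma squeeze0: "(f :: nat \<Rightarrow> real) \<longlonglongrightarrow> 0 \<Longrightarrow> (\<And>n. g n \<le> f n) \<Longrightarrow> (\<And>n. 0 \<le> g n) \<Longrightarrow> g \<longlonglongrightarrow> 0"
  by (rule tendsto_sandwich[of "\<lambda>_. 0" g sequentially f]) auto


lemma kconv_iff: "kconv av X L \<longleftrightarrow> (\<lambda>n. av (X n - L)) \<longlonglongrightarrow> 0"
  unfolding kconv_def LIMSEQ_iff by (simp add: eventually_sequentially)

lemma kconv_unique: "kconv av X L \<Longrightarrow> kconv av X M \<Longrightarrow> L = M"
proof (rule ccontr)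
  assume a: "kconv av X L" "kconv av X M" "L \<noteq> M"
  hence e: "av (L - M) > 0" using av_pos by simp
  from a(1,2) e obtain N1 N2 where "\<forall>n\<ge>N1. av (X n - L) < av (L - M)" "\<forall>n\<ge>N2. av (X n - M) < av (L - M)"
    unfolding kconv_def by meson
  hence "av (X (max N1 N2) - L) < av (L - M)" "av (X (max N1 N2) - M) < av (L - M)" by auto
  moreover have "av (L - M) \<le> max (av (L - X (max N1 N2))) (av (X (max N1 N2) - M))"
    using av_ultra[of "L - X (max N1 N2)" "X (max N1 N2) - M"] by simp
  ultimately show False using av_commute[of L "X (max N1 N2)"] by linarith
qed

lemma ksum_eq: "kconv av (\<lambda>n. \<Sum>i<n. x i) S \<Longrightarrow> ksum av x = S"
  unfolding ksum_def by (rule the_equality) (auto intro: kconv_unique)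

lemma kconv_add: "kconv av X L \<Longrightarrow> kconv av Y M \<Longrightarrow> kconv av (\<lambda>n. X n + Y n) (L + M)"
  unfolding kconv_iff
proof -
  assume a: "(\<lambda>n. av (X n - L)) \<longlonglongrightarrow> 0" "(\<lambda>n. av (Y n - M)) \<longlonglongrightarrow> 0"
  have "(\<lambda>n. av (X n - L) + av (Y n - M)) \<longlonglongrightarrow> 0" using tendsto_add[OF a] by simp
  moreover have "av (X n + Y n - (L + M)) \<le> av (X n - L) + av (Y n - M)" for n
    using av_ultra[of "X n - L" "Y n - M"] av_nonneg[of "X n - L"] av_nonneg[of "Y n - M"]
    unfolding le_max_iff_disj by (simp add: algebra_simps) (smt (verit) av_nonneg)
  ultimately show "(\<lambda>n. av (X n + Y n - (L + M))) \<longlonglongrightarrow> 0"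
    by (rule squeeze0) auto
qed

lemma kconv_cmult: "kconv av X L \<Longrightarrow> kconv av (\<lambda>n. c * X n) (c * L)"
  unfolding kconv_iff
proof -
  assume a: "(\<lambda>n. av (X n - L)) \<longlonglongrightarrow> 0"
  have "(\<lambda>n. av c * av (X n - L)) \<longlonglongrightarrow> 0" using tendsto_mult[OF tendsto_const a] by simp
  thus "(\<lambda>n. av (c * X n - c * L)) \<longlonglongrightarrow> 0" by (simp add: av_mult right_diff_distrib[symmetric])
qed

lemma kconv_const: "kconv av (\<lambda>n. c) c" by (simp add: kconv_iff)

lemma kconv_cong_ev: "kconv av X L \<Longrightarrow> eventually (\<lambda>n. X n = Y n) sequentially \<Longrightarrow> kconv av Y L"
  unfolding kconv_iff
  by (erule Lim_transform_eventually) (auto elim: eventually_mono)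

lemma kconv_minus: "kconv av X L \<Longrightarrow> kconv av (\<lambda>n. - X n) (- L)"
  using kconv_cmult[of X L "-1"] by simp

lemma kconv_diff: "kconv av X L \<Longrightarrow> kconv av Y M \<Longrightarrow> kconv av (\<lambda>n. X n - Y n) (L - M)"
  using kconv_add[OF _ kconv_minus, of X L Y M] by simp

lemma kconv_sum: "(\<And>i. i \<in> A \<Longrightarrow> kconv av (X i) (L i)) \<Longrightarrow> kconv av (\<lambda>n. \<Sum>i\<in>A. X i n) (\<Sum>i\<in>A. L i)"
proof (induct A rule: infinite_finite_induct)
  case (infinite A) thus ?case by (simp add: kconv_const)
next
  case empty thus ?case by (simp add: kconv_const)
next
  case (insert x F) thus ?case using kconv_add[of "X x" "L x"] by simp
qed

lemma kconv_shift: "kconv av X L \<Longrightarrow> kconv av (\<lambda>n. X (n - k)) L"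
  unfolding kconv_iff
proof -
  assume a: "(\<lambda>n. av (X n - L)) \<longlonglongrightarrow> 0"
  have "filterlim (\<lambda>n. n - k) sequentially sequentially"
    by (simp add: filterlim_iff eventually_sequentially) (metis add_le_imp_le_diff le_add2 order_trans)
  from filterlim_compose[OF a this] show "(\<lambda>n. av (X (n - k) - L)) \<longlonglongrightarrow> 0" by (simp add: o_def)
qed

lemma kconv_shift2: "kconv av X L \<Longrightarrow> kconv av (\<lambda>n. X (n + k)) L"
  unfolding kconv_iff using LIMSEQ_ignore_initial_segment by auto

lemma kconv_bound:
  assumes "kconv av X L" "eventually (\<lambda>n. av (X n) \<le> B) sequentially"
  shows "av L \<le> B"
proof (rule ccontr)
  assume "\<not> av L \<le> B"
  hence lt: "B < av L" by simp
  have B0: "0 \<le> B" using assms(2) unfolding eventually_sequentially using av_nonneg order.trans by blast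
  hence "av L > 0" using lt by simp
  from assms(1) this obtain N where N: "\<forall>n\<ge>N. av (X n - L) < av L" unfolding kconv_def by blast
  from assms(2) obtain N2 where N2: "\<forall>n\<ge>N2. av (X n) \<le> B" by (auto simp: eventually_sequentially)
  let ?n = "max N N2"
  have "av L \<le> max (av (L - X ?n)) (av (X ?n))" using av_ultra[of "L - X ?n" "X ?n"] by simp
  thus False using N N2 lt av_commute[of L "X ?n"] by (smt (verit) max.cobounded1 max.cobounded2)
qed

lemma conv_terms0: "kconv av (\<lambda>n. \<Sum>i<n. x i) S \<Longrightarrow> (\<lambda>n. av (x n)) \<longlonglongrightarrow> 0"
proof -
  assume a: "kconv av (\<lambda>n. \<Sum>i<n. x i) S"
  hence a2: "kconv av (\<lambda>n. \<Sum>i<n + 1. x i) S" by (rule kconv_shift2)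
  have "kconv av (\<lambda>n. (\<Sum>i<n + 1. x i) - (\<Sum>i<n. x i)) (S - S)" by (rule kconv_diff[OF a2 a])
  hence "kconv av x 0" by simp
  thus ?thesis by (simp add: kconv_iff)
qed

lemma terms0_conv:
  assumes "(\<lambda>n. av (x n)) \<longlonglongrightarrow> 0"
  shows "kconv av (\<lambda>n. \<Sum>i<n. x i) (ksum av x)"
proof -
  have "kcauchy av (\<lambda>n. \<Sum>i<n. x i)"
    unfolding kcauchy_def
  proof (intro allI impI)
    fix e :: real assume e: "e > 0"
    from assms e obtain N where N: "\<forall>n\<ge>N. av (x n) < e/2" unfolding LIMSEQ_iff
      by (metis abs_of_nonneg av_nonneg diff_zero half_gt_zero real_norm_def)
    have "av ((\<Sum>i<m. x i) - (\<Sum>i<n. x i)) < e" if "m \<ge> N" "n \<ge> N" for m n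
    proof -
      have gen: "av ((\<Sum>i<m. x i) - (\<Sum>i<n. x i)) < e" if "n \<le> m" "N \<le> n" for m n
      proof -
        have "(\<Sum>i<m. x i) - (\<Sum>i<n. x i) = (\<Sum>i\<in>{n..<m}. x i)"
          using that sum_diff_nat_ivl[of 0 n m x] by (simp add: lessThan_atLeast0)
        moreover have "av (\<Sum>i\<in>{n..<m}. x i) \<le> e/2"
        proof (rule av_sum_le)
          show "0 \<le> e/2" using e by simp
          fix i assume "i \<in> {n..<m}"
          hence "i \<ge> N" using that by auto
          thus "av (x i) \<le> e/2" using N by (simp add: less_imp_le)
        qed
        ultimately show ?thesis using e by simp
      qed
      show ?thesis
      proof (cases "n \<le> m")
        case True thus ?thesis using gen that by auto
      next
        case False thus ?thesis using gen[of m n] that av_commute by (metis linorder_le_cases)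
      qed
    qed
    thus "\<exists>N. \<forall>m\<ge>N. \<forall>n\<ge>N. av ((\<Sum>i<m. x i) - (\<Sum>i<n. x i)) < e" by blast
  qed
  with compl obtain L where "kconv av (\<lambda>n. \<Sum>i<n. x i) L" by blast
  thus ?thesis using ksum_eq by simp
qed

end



lemma lim0I:
  fixes g :: "nat \<Rightarrow> real"
  assumes "\<And>e. e > 0 \<Longrightarrow> eventually (\<lambda>n. g n \<le> e) sequentially" "\<And>n. 0 \<le> g n"
  shows "g \<longlonglongrightarrow> 0"
proof (rule order_tendstoI)
  fix a :: real assume "a < 0" thus "eventually (\<lambda>n. a < g n) sequentially" using assms(2)
    by (simp add: order_less_le_trans)
next
  fix a :: real assume "0 < a"
  have "eventually (\<lambda>n. g n \<le> a/2) sequentially" by (rule assms(1)) (use \<open>0 < a\<close> in simp)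
  thus "eventually (\<lambda>n. g n < a) sequentially" using \<open>0 < a\<close> by (auto elim: eventually_mono)
qed

lemma lim0_mult_small:
  fixes f :: "nat \<Rightarrow> real"
  assumes "f \<longlonglongrightarrow> 0" "e > 0"
  shows "\<exists>M. \<forall>k\<ge>M. \<bar>f k * B\<bar> \<le> e"
proof -
  have "(\<lambda>k. f k * B) \<longlonglongrightarrow> 0" using tendsto_mult_left_zero[OF assms(1)] by simp
  then obtain M where "\<forall>k\<ge>M. \<bar>f k * B\<bar> < e" using assms(2) unfolding LIMSEQ_iff by fastforce
  thus ?thesis by (auto intro: less_imp_le)
qed

lemma sum_shift_if:
  fixes g :: "nat \<Rightarrow> 'a::comm_monoid_add" and N :: nat
  shows "(\<Sum>n<N. if k \<le> n then g (n - k) else 0) = (\<Sum>j<N - k. g j)"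
proof (induct N)
  case (Suc N) thus ?case by (cases "k \<le> N") (auto simp: Suc_diff_le)
qed simp

context nak
begin

lemma fubini:
  fixes w :: "nat \<Rightarrow> nat \<Rightarrow> 'k"
  assumes tri: "\<And>m n. n < m \<Longrightarrow> w m n = 0"
    and rows: "\<And>m. kconv av (\<lambda>N. \<Sum>n<N. w m n) (r m)"
    and unif: "\<And>e. e > 0 \<Longrightarrow> \<exists>M. \<forall>m\<ge>M. \<forall>n. av (w m n) \<le> e"
  shows "kconv av (\<lambda>N. \<Sum>n<N. \<Sum>m\<le>n. w m n) (ksum av r)"
proof -
  have tail: "av ((\<Sum>n<N. w m n) - r m) \<le> e" if "\<forall>n. av (w m n) \<le> e" "e > 0" for m N e
  proof -
    have "kconv av (\<lambda>K. (\<Sum>n<N. w m n) - (\<Sum>n<K. w m n)) ((\<Sum>n<N. w m n) - r m)"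
      by (rule kconv_diff[OF kconv_const rows])
    moreover have "eventually (\<lambda>K. av ((\<Sum>n<N. w m n) - (\<Sum>n<K. w m n)) \<le> e) sequentially"
      unfolding eventually_sequentially
    proof (intro exI allI impI)
      fix K assume "N \<le> K"
      hence "(\<Sum>n<N. w m n) - (\<Sum>n<K. w m n) = - (\<Sum>n\<in>{N..<K}. w m n)"
        using sum_diff_nat_ivl[of 0 N K "w m"] by (simp add: lessThan_atLeast0) (metis minus_diff_eq)
      moreover have "av (\<Sum>n\<in>{N..<K}. w m n) \<le> e" using that by (intro av_sum_le) auto
      ultimately show "av ((\<Sum>n<N. w m n) - (\<Sum>n<K. w m n)) \<le> e" by simp
    qed
    ultimately show ?thesis by (rule kconv_bound)
  qed
  have r0: "(\<lambda>m. av (r m)) \<longlonglongrightarrow> 0"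
  proof (rule lim0I)
    fix e :: real assume e: "e > 0"
    then obtain M where M: "\<forall>m\<ge>M. \<forall>n. av (w m n) \<le> e" using unif by blast
    have "av (r m) \<le> e" if "m \<ge> M" for m
      using tail[of m e 0] M that e by simp
    thus "eventually (\<lambda>m. av (r m) \<le> e) sequentially" by (auto simp: eventually_sequentially)
  qed simp
  have rS: "kconv av (\<lambda>N. \<Sum>m<N. r m) (ksum av r)" by (rule terms0_conv[OF r0])
  define D where "D N = (\<Sum>m<N. (\<Sum>n<N. w m n) - r m)" for N
  have eq: "(\<Sum>n<N. \<Sum>m\<le>n. w m n) = (\<Sum>m<N. r m) + D N" for N
  proof -
    have "(\<Sum>n<N. \<Sum>m\<le>n. w m n) = (\<Sum>n<N. \<Sum>m<N. w m n)"
    proof (rule sum.cong[OF refl])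
      fix n assume "n \<in> {..<N}"
      hence "{..n} \<subseteq> {..<N}" by auto
      thus "(\<Sum>m\<le>n. w m n) = (\<Sum>m<N. w m n)"
        by (intro sum.mono_neutral_left) (auto simp: tri)
    qed
    also have "\<dots> = (\<Sum>m<N. \<Sum>n<N. w m n)" by (rule sum.swap)
    finally show ?thesis by (simp add: D_def sum_subtractf)
  qed
  have D0: "kconv av D 0"
    unfolding kconv_iff
  proof (simp, rule lim0I)
    fix e :: real assume e: "e > 0"
    then obtain M where M: "\<forall>m\<ge>M. \<forall>n. av (w m n) \<le> e" using unif by blast
    have ev: "eventually (\<lambda>N. \<forall>m\<in>{..<M}. av ((\<Sum>n<N. w m n) - r m) \<le> e) sequentially"
    proof (rule eventually_ball_finite)
      show "finite {..<M}" by simp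
      show "\<forall>m\<in>{..<M}. eventually (\<lambda>N. av ((\<Sum>n<N. w m n) - r m) \<le> e) sequentially"
      proof
        fix m
        have "(\<lambda>N. av ((\<Sum>n<N. w m n) - r m)) \<longlonglongrightarrow> 0" using rows[of m] by (simp add: kconv_iff)
        then obtain N0 where N0: "\<forall>N\<ge>N0. norm (av ((\<Sum>n<N. w m n) - r m)) < e"
          using e unfolding LIMSEQ_iff by fastforce
        show "eventually (\<lambda>N. av ((\<Sum>n<N. w m n) - r m) \<le> e) sequentially"
          unfolding eventually_sequentially
        proof (intro exI allI impI)
          fix N assume "N0 \<le> N"
          hence "norm (av ((\<Sum>n<N. w m n) - r m)) < e" using N0 by blast
          thus "av ((\<Sum>n<N. w m n) - r m) \<le> e" by simp
        qed
      qed
    qed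
    thus "eventually (\<lambda>N. av (D N) \<le> e) sequentially"
    proof (rule eventually_mono)
      fix N assume h: "\<forall>m\<in>{..<M}. av ((\<Sum>n<N. w m n) - r m) \<le> e"
      show "av (D N) \<le> e" unfolding D_def
      proof (rule av_sum_le)
        show "0 \<le> e" using e by simp
        fix m assume "m \<in> {..<N}"
        show "av ((\<Sum>n<N. w m n) - r m) \<le> e"
        proof (cases "m < M")
          case True thus ?thesis using h by auto
        next
          case False thus ?thesis using tail[of m e N] M e by simp
        qed
      qed
    qed
  qed simp
  show ?thesis using kconv_add[OF rS D0] by (simp add: eq)
qed

definition bd :: "'k fps \<Rightarrow> real \<Rightarrow> real \<Rightarrow> bool" where
  "bd a \<rho> B \<longleftrightarrow> (\<forall>n. av (a$n) * \<rho>^n \<le> B)"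

definition tz :: "'k fps \<Rightarrow> real \<Rightarrow> bool" where
  "tz a \<rho> \<longleftrightarrow> (\<lambda>n. av (a$n) * \<rho>^n) \<longlonglongrightarrow> 0"

lemma bd_nonneg: "bd a \<rho> B \<Longrightarrow> 0 \<le> B"
proof -
  assume "bd a \<rho> B"
  hence "av (a$0) * \<rho>^0 \<le> B" unfolding bd_def by blast
  hence "av (a$0) \<le> B" by simp
  thus ?thesis using av_nonneg[of "a$0"] by linarith
qed

lemma bd_mono: assumes "bd a \<rho> B" "0 \<le> r" "r \<le> \<rho>" shows "bd a r B"
  unfolding bd_def
proof
  fix n
  have "r^n \<le> \<rho>^n" by (rule power_mono) (use assms in auto)
  hence "av (a$n) * r^n \<le> av (a$n) * \<rho>^n" by (rule mult_left_mono) simp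
  also have "\<dots> \<le> B" using assms(1) unfolding bd_def by blast
  finally show "av (a$n) * r^n \<le> B" .
qed

lemma bd_mono2: "bd a \<rho> B \<Longrightarrow> B \<le> B' \<Longrightarrow> bd a \<rho> B'"
  unfolding bd_def using order_trans by blast

lemma bd_tz: assumes "bd a \<rho> B" "0 \<le> r" "r < \<rho>" shows "tz a r"
proof -
  have B: "0 \<le> B" using bd_nonneg[OF assms(1)] .
  have rho: "0 < \<rho>" using assms by simp
  have q: "(\<lambda>n. B * (r/\<rho>)^n) \<longlonglongrightarrow> 0"
    using assms rho by (intro tendsto_mult_right_zero LIMSEQ_power_zero) auto
  have "av (a$n) * r^n \<le> B * (r/\<rho>)^n" for n
  proof -
    have "av (a$n) * r^n = (av (a$n) * \<rho>^n) * (r/\<rho>)^n" using rho by (simp add: power_divide)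
    also have "\<dots> \<le> B * (r/\<rho>)^n" using assms(1,2) rho unfolding bd_def
      by (intro mult_right_mono) auto
    finally show ?thesis .
  qed
  thus ?thesis unfolding tz_def using assms(2) by (intro squeeze0[OF q]) auto
qed

lemma tz_bd: "tz a \<rho> \<Longrightarrow> \<exists>B. bd a \<rho> B"
proof -
  assume "tz a \<rho>"
  hence "Bseq (\<lambda>n. av (a$n) * \<rho>^n)" unfolding tz_def by (rule convergent_imp_Bseq[OF convergentI])
  then obtain K where "\<forall>n. norm (av (a$n) * \<rho>^n) \<le> K" unfolding Bseq_def by blast
  hence "\<forall>n. av (a$n) * \<rho>^n \<le> K" by (auto intro: order_trans[OF abs_ge_self])
  thus ?thesis unfolding bd_def by blast
qed

lemma ev_conv:
  assumes "tz a (av x)"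
  shows "kconv av (\<lambda>N. \<Sum>n<N. a$n * x^n) (ev av a x)"
proof -
  have "(\<lambda>n. av (a$n * x^n)) = (\<lambda>n. av (a$n) * av x ^ n)" by (simp add: av_mult av_power)
  thus ?thesis unfolding ev_def using assms unfolding tz_def by (intro terms0_conv) simp
qed

end


context nak
begin

lemma av_sum_le_w:
  assumes "0 \<le> c" "0 \<le> B" "\<And>i. i \<in> A \<Longrightarrow> av (g i) * c \<le> B"
  shows "av (sum g A) * c \<le> B"
  using assms(3)
proof (induct A rule: infinite_finite_induct)
  case (insert x F)
  have "av (g x + sum g F) * c \<le> max (av (g x)) (av (sum g F)) * c"
    by (rule mult_right_mono[OF av_ultra assms(1)])
  also have "\<dots> = max (av (g x) * c) (av (sum g F) * c)" using assms(1) by (simp add: max_mult_distrib_right)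
  also have "\<dots> \<le> B" using insert by simp
  finally show ?case using insert by simp
qed (use assms in auto)

definition good :: "'k fps \<Rightarrow> real \<Rightarrow> bool" where
  "good a \<rho> \<longleftrightarrow> (\<exists>B. bd a \<rho> B)"

lemma bd_mult:
  assumes "bd a \<rho> A" "bd b \<rho> B" "0 \<le> \<rho>"
  shows "bd (a * b) \<rho> (A * B)"
  unfolding bd_def
proof
  fix n
  have A: "0 \<le> A" "0 \<le> B" using bd_nonneg assms by auto
  show "av ((a*b)$n) * \<rho>^n \<le> A * B" unfolding fps_mult_nth
  proof (rule av_sum_le_w)
    show "0 \<le> \<rho>^n" using assms(3) by simp
    show "0 \<le> A * B" using A by simp
    fix i assume i: "i \<in> {0..n}"
    have "av (a$i * b$(n-i)) * \<rho>^n = (av (a$i) * \<rho>^i) * (av (b$(n-i)) * \<rho>^(n-i))"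
      using i by (simp add: av_mult power_add[symmetric])
    also have "\<dots> \<le> A * B" using assms A(1) unfolding bd_def
      by (intro mult_mono) (auto simp: zero_le_mult_iff)
    finally show "av (a$i * b$(n-i)) * \<rho>^n \<le> A * B" .
  qed
qed

lemma bd_one: "bd 1 \<rho> 1"
  unfolding bd_def by (simp add: fps_one_nth)

lemma bd_power: "bd a \<rho> A \<Longrightarrow> 0 \<le> \<rho> \<Longrightarrow> bd (a^m) \<rho> (A^m)"
  by (induct m) (auto simp: bd_one intro: bd_mult)

lemma bd_add: "bd a \<rho> A \<Longrightarrow> bd b \<rho> B \<Longrightarrow> 0 \<le> \<rho> \<Longrightarrow> bd (a + b) \<rho> (max A B)"
  unfolding bd_def
proof
  fix n assume h: "\<forall>n. av (a$n) * \<rho>^n \<le> A" "\<forall>n. av (b$n) * \<rho>^n \<le> B" "0 \<le> \<rho>"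
  have "av ((a+b)$n) * \<rho>^n \<le> max (av (a$n)) (av (b$n)) * \<rho>^n"
    using h(3) by (intro mult_right_mono) (simp_all add: av_ultra)
  also have "\<dots> = max (av (a$n) * \<rho>^n) (av (b$n) * \<rho>^n)" using h(3) by (simp add: max_mult_distrib_right)
  also have "\<dots> \<le> max A B" using h by (meson max.mono)
  finally show "av ((a+b)$n) * \<rho>^n \<le> max A B" .
qed

lemma bd_uminus: "bd a \<rho> A \<Longrightarrow> bd (- a) \<rho> A"
  unfolding bd_def by simp

lemma bd_const: "bd (fps_const c) \<rho> (av c)"
  unfolding bd_def by simp

lemma bd_X: "0 \<le> \<rho> \<Longrightarrow> bd fps_X \<rho> \<rho>"
  unfolding bd_def by (simp add: fps_X_nth)

lemma good_mult: "good a \<rho> \<Longrightarrow> good b \<rho> \<Longrightarrow> 0 \<le> \<rho> \<Longrightarrow> good (a * b) \<rho>"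
  unfolding good_def using bd_mult by blast
lemma good_add: "good a \<rho> \<Longrightarrow> good b \<rho> \<Longrightarrow> 0 \<le> \<rho> \<Longrightarrow> good (a + b) \<rho>"
  unfolding good_def using bd_add by blast
lemma good_uminus: "good a \<rho> \<Longrightarrow> good (- a) \<rho>"
  unfolding good_def using bd_uminus by blast
lemma good_diff: "good a \<rho> \<Longrightarrow> good b \<rho> \<Longrightarrow> 0 \<le> \<rho> \<Longrightarrow> good (a - b) \<rho>"
  using good_add[OF _ good_uminus] by (metis diff_conv_add_uminus)
lemma good_const: "good (fps_const c) \<rho>"
  unfolding good_def using bd_const by blast
lemma good_one: "good 1 \<rho>"
  unfolding good_def using bd_one by blast
lemma good_X: "0 \<le> \<rho> \<Longrightarrow> good fps_X \<rho>"
  unfolding good_def using bd_X by blast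
lemma good_power: "good a \<rho> \<Longrightarrow> 0 \<le> \<rho> \<Longrightarrow> good (a ^ m) \<rho>"
  unfolding good_def using bd_power by blast
lemma good_mono: "good a \<rho> \<Longrightarrow> 0 \<le> r \<Longrightarrow> r \<le> \<rho> \<Longrightarrow> good a r"
  unfolding good_def using bd_mono by blast
lemma good_sum: "(\<And>i. i \<in> S \<Longrightarrow> good (f i) \<rho>) \<Longrightarrow> 0 \<le> \<rho> \<Longrightarrow> good (sum f S) \<rho>"
proof (induct S rule: infinite_finite_induct)
  case (insert x F) thus ?case by (simp add: good_add)
qed (auto simp: good_def intro: bd_const[of 0, simplified])
lemma good_prod: "(\<And>i. i \<in> S \<Longrightarrow> good (f i) \<rho>) \<Longrightarrow> 0 \<le> \<rho> \<Longrightarrow> good (prod f S) \<rho>"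
proof (induct S rule: infinite_finite_induct)
  case (insert x F) thus ?case by (simp add: good_mult)
qed (auto simp: good_one)

lemma good_tz: "good a \<rho> \<Longrightarrow> av x < \<rho> \<Longrightarrow> tz a (av x)"
  unfolding good_def using bd_tz av_nonneg by blast

lemma ev_add: "tz a (av x) \<Longrightarrow> tz b (av x) \<Longrightarrow> ev av (a + b) x = ev av a x + ev av b x"
proof -
  assume "tz a (av x)" "tz b (av x)"
  from kconv_add[OF ev_conv[OF this(1)] ev_conv[OF this(2)]]
  have "kconv av (\<lambda>N. \<Sum>n<N. (a+b)$n * x^n) (ev av a x + ev av b x)"
    by (simp add: sum.distrib distrib_right)
  thus ?thesis unfolding ev_def by (rule ksum_eq)
qed

lemma ev_uminus: "tz a (av x) \<Longrightarrow> ev av (- a) x = - ev av a x"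
proof -
  assume "tz a (av x)"
  from kconv_minus[OF ev_conv[OF this]]
  have "kconv av (\<lambda>N. \<Sum>n<N. (-a)$n * x^n) (- ev av a x)"
    by (simp add: sum_negf)
  thus ?thesis unfolding ev_def by (rule ksum_eq)
qed

lemma ev_const: "ev av (fps_const c) x = c"
proof -
  have "kconv av (\<lambda>N. \<Sum>n<N. (fps_const c)$n * x^n) c"
  proof (rule kconv_cong_ev[OF kconv_const])
    show "eventually (\<lambda>N. c = (\<Sum>n<N. (fps_const c)$n * x^n)) sequentially"
      unfolding eventually_sequentially
    proof (intro exI[of _ 1] allI impI)
      fix N :: nat assume "1 \<le> N"
      hence "(\<Sum>n<N. (fps_const c)$n * x^n) = (\<Sum>n\<in>{0}. (fps_const c)$n * x^n)"
        by (intro sum.mono_neutral_right) auto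
      thus "c = (\<Sum>n<N. (fps_const c)$n * x^n)" by simp
    qed
  qed
  thus ?thesis unfolding ev_def by (rule ksum_eq)
qed

lemma ev_X: "ev av fps_X x = x"
proof -
  have "kconv av (\<lambda>N. \<Sum>n<N. fps_X$n * x^n) x"
  proof (rule kconv_cong_ev[OF kconv_const])
    show "eventually (\<lambda>N. x = (\<Sum>n<N. fps_X$n * x^n)) sequentially"
      unfolding eventually_sequentially
    proof (intro exI[of _ 2] allI impI)
      fix N :: nat assume "2 \<le> N"
      hence "(\<Sum>n<N. fps_X$n * x^n) = (\<Sum>n\<in>{1}. fps_X$n * x^n)"
        by (intro sum.mono_neutral_right) (auto simp: fps_X_nth)
      thus "x = (\<Sum>n<N. fps_X$n * x^n)" by (simp add: fps_X_nth)
    qed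
  qed
  thus ?thesis unfolding ev_def by (rule ksum_eq)
qed

lemma ev_mult_conv:
  assumes a: "bd a \<rho> A" and b: "bd b \<rho> B" and x: "av x < \<rho>"
  shows "kconv av (\<lambda>N. \<Sum>n<N. (a*b)$n * x^n) (ev av a x * ev av b x)"
proof -
  have ta: "tz a (av x)" and tb: "tz b (av x)" using bd_tz a b x by auto
  have bb: "bd b (av x) B" using bd_mono[OF b] x by simp
  define w where "w k n = (if k \<le> n then a$k * x^k * (b$(n-k) * x^(n-k)) else 0)" for k n
  define r where "r k = a$k * x^k * ev av b x" for k
  have "kconv av (\<lambda>N. \<Sum>n<N. \<Sum>k\<le>n. w k n) (ksum av r)"
  proof (rule fubini)
    show "\<And>m n. n < m \<Longrightarrow> w m n = 0" by (simp add: w_def)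
    fix m
    have "kconv av (\<lambda>N. a$m * x^m * (\<Sum>j<N - m. b$j * x^j)) (a$m * x^m * ev av b x)"
      by (rule kconv_cmult[OF kconv_shift[OF ev_conv[OF tb]]])
    moreover have "(\<Sum>n<N. w m n) = a$m * x^m * (\<Sum>j<N - m. b$j * x^j)" for N
      unfolding w_def by (simp add: sum_shift_if[of m "\<lambda>j. a$m * x^m * (b$j * x^j)" N, simplified] sum_distrib_left)
    ultimately show "kconv av (\<lambda>N. \<Sum>n<N. w m n) (r m)" by (simp add: r_def)
  next
    fix e :: real assume e: "e > 0"
    have "(\<lambda>k. av (a$k) * av x ^ k) \<longlonglongrightarrow> 0" using ta by (simp add: tz_def)
    from lim0_mult_small[OF this e, of B] obtain M where M: "\<forall>k\<ge>M. \<bar>av (a$k) * av x ^ k * B\<bar> \<le> e" by blast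
    have "av (w m n) \<le> e" if "m \<ge> M" for m n
    proof (cases "m \<le> n")
      case True
      have "av (w m n) = (av (a$m) * av x ^ m) * (av (b$(n-m)) * av x ^ (n-m))"
        using True by (simp add: w_def av_mult av_power)
      also have "\<dots> \<le> (av (a$m) * av x ^ m) * B"
        using bb unfolding bd_def by (intro mult_left_mono) auto
      also have "\<dots> \<le> e" using M that by (meson abs_ge_self order_trans)
      finally show ?thesis .
    qed (use e in \<open>simp add: w_def\<close>)
    thus "\<exists>M. \<forall>m\<ge>M. \<forall>n. av (w m n) \<le> e" by blast
  qed
  moreover have "(\<Sum>k\<le>n. w k n) = (a*b)$n * x^n" for n
    unfolding w_def fps_mult_nth atMost_atLeast0[symmetric] sum_distrib_right
    by (intro sum.cong refl) (auto simp: algebra_simps power_add[symmetric])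
  moreover have "ksum av r = ev av a x * ev av b x"
  proof (rule ksum_eq)
    show "kconv av (\<lambda>N. \<Sum>k<N. r k) (ev av a x * ev av b x)"
      using kconv_cmult[OF ev_conv[OF ta], of "ev av b x"]
      by (simp add: r_def sum_distrib_left sum_distrib_right mult.commute)
  qed
  ultimately show ?thesis by simp
qed

lemma ev_mult:
  "bd a \<rho> A \<Longrightarrow> bd b \<rho> B \<Longrightarrow> av x < \<rho> \<Longrightarrow> ev av (a * b) x = ev av a x * ev av b x"
  unfolding ev_def[of av "a*b"] by (rule ksum_eq, rule ev_mult_conv)

end


context nak
begin

lemma ev_mult_g: "good a \<rho> \<Longrightarrow> good b \<rho> \<Longrightarrow> av x < \<rho> \<Longrightarrow> ev av (a * b) x = ev av a x * ev av b x"
  unfolding good_def using ev_mult by blast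
lemma ev_add_g: "good a \<rho> \<Longrightarrow> good b \<rho> \<Longrightarrow> av x < \<rho> \<Longrightarrow> ev av (a + b) x = ev av a x + ev av b x"
  using ev_add good_tz by blast
lemma ev_uminus_g: "good a \<rho> \<Longrightarrow> av x < \<rho> \<Longrightarrow> ev av (- a) x = - ev av a x"
  using ev_uminus good_tz by blast
lemma ev_diff_g: "good a \<rho> \<Longrightarrow> good b \<rho> \<Longrightarrow> av x < \<rho> \<Longrightarrow> ev av (a - b) x = ev av a x - ev av b x"
proof -
  assume h: "good a \<rho>" "good b \<rho>" "av x < \<rho>"
  have r: "0 \<le> \<rho>" using h(3) av_nonneg[of x] by linarith
  have "ev av (a + - b) x = ev av a x + ev av (- b) x" using h r by (intro ev_add_g[of _ \<rho>] good_uminus) auto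
  thus ?thesis using ev_uminus_g[OF h(2,3)] by simp
qed
lemma ev_one: "ev av 1 x = 1"
  using ev_const[of 1 x] by simp
lemma ev_power_g: "good a \<rho> \<Longrightarrow> av x < \<rho> \<Longrightarrow> ev av (a ^ m) x = ev av a x ^ m"
proof (induct m)
  case 0 thus ?case by (simp add: ev_one)
next
  case (Suc m)
  have r: "0 \<le> \<rho>" using Suc(3) av_nonneg[of x] by linarith
  show ?case using Suc ev_mult_g[of a \<rho> "a^m" x] good_power[OF Suc(2) r] by simp
qed
lemma ev_sum_g: "(\<And>i. i \<in> S \<Longrightarrow> good (f i) \<rho>) \<Longrightarrow> av x < \<rho> \<Longrightarrow> ev av (sum f S) x = (\<Sum>i\<in>S. ev av (f i) x)"
proof (induct S rule: infinite_finite_induct)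
  case (insert y F)
  have r: "0 \<le> \<rho>" using insert.prems(2) av_nonneg[of x] by linarith
  have "ev av (f y + sum f F) x = ev av (f y) x + ev av (sum f F) x"
    using insert r by (intro ev_add_g[of _ \<rho>] good_sum) auto
  thus ?case using insert by simp
qed (auto simp: ev_const[of 0, simplified])

lemma ev_conv_g: "good a \<rho> \<Longrightarrow> av x < \<rho> \<Longrightarrow> kconv av (\<lambda>N. \<Sum>n<N. a$n * x^n) (ev av a x)"
  using ev_conv good_tz by blast

lemma bd_compose:
  assumes g: "bd g \<sigma> Bg" and h: "bd h t \<sigma>" and t: "0 \<le> t"
  shows "bd (g oo h) t Bg"
  unfolding bd_def
proof
  fix n
  have s: "0 \<le> \<sigma>" using bd_nonneg[OF h] .
  have B: "0 \<le> Bg" using bd_nonneg[OF g] .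
  show "av ((g oo h)$n) * t^n \<le> Bg" unfolding fps_compose_nth
  proof (rule av_sum_le_w)
    show "0 \<le> t^n" using t by simp
    show "0 \<le> Bg" by (rule B)
    fix i assume "i \<in> {0..n}"
    have "av (g$i * (h^i)$n) * t^n = av (g$i) * (av ((h^i)$n) * t^n)" by (simp add: av_mult)
    also have "\<dots> \<le> av (g$i) * \<sigma>^i"
      using bd_power[OF h t, of i] unfolding bd_def by (intro mult_left_mono) auto
    also have "\<dots> \<le> Bg" using g unfolding bd_def by blast
    finally show "av (g$i * (h^i)$n) * t^n \<le> Bg" .
  qed
qed

lemma ev_compose:
  assumes h0: "h$0 = 0" and bh: "bd h \<rho> Bh" and x: "av x < \<rho>"
    and g: "tz g \<sigma>" and small: "bd h (av x) \<sigma>"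
  shows "ev av (g oo h) x = ev av g (ev av h x)"
proof -
  have hp: "kconv av (\<lambda>N. \<Sum>n<N. (h^m)$n * x^n) (ev av h x ^ m)" for m
  proof -
    have gh: "good h \<rho>" using bh good_def by blast
    have r: "0 \<le> \<rho>" using x av_nonneg[of x] by linarith
    have "kconv av (\<lambda>N. \<Sum>n<N. (h^m)$n * x^n) (ev av (h^m) x)"
      by (rule ev_conv_g[OF good_power[OF gh r] x])
    thus ?thesis using ev_power_g[OF gh x] by simp
  qed
  have s: "0 \<le> \<sigma>" using bd_nonneg[OF small] .
  define w where "w m n = (if m \<le> n then g$m * ((h^m)$n * x^n) else 0)" for m n
  define r where "r m = g$m * ev av h x ^ m" for m
  have "kconv av (\<lambda>N. \<Sum>n<N. \<Sum>m\<le>n. w m n) (ksum av r)"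
  proof (rule fubini)
    show "\<And>m n. n < m \<Longrightarrow> w m n = 0" by (simp add: w_def)
    fix m
    have "w m n = g$m * ((h^m)$n * x^n)" for n
      using startsby_zero_power_prefix[OF h0, of m] by (auto simp: w_def)
    hence "(\<lambda>N. \<Sum>n<N. w m n) = (\<lambda>N. g$m * (\<Sum>n<N. (h^m)$n * x^n))" by (simp add: sum_distrib_left)
    thus "kconv av (\<lambda>N. \<Sum>n<N. w m n) (r m)" using kconv_cmult[OF hp[of m], of "g$m"] by (simp add: r_def)
  next
    fix e :: real assume e: "e > 0"
    have "(\<lambda>k. av (g$k) * \<sigma> ^ k) \<longlonglongrightarrow> 0" using g by (simp add: tz_def)
    from lim0_mult_small[OF this e, of 1] obtain M where M: "\<forall>k\<ge>M. \<bar>av (g$k) * \<sigma> ^ k * 1\<bar> \<le> e" by blast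
    have "av (w m n) \<le> e" if "m \<ge> M" for m n
    proof (cases "m \<le> n")
      case True
      have "av (w m n) = av (g$m) * (av ((h^m)$n) * av x ^ n)"
        using True by (simp add: w_def av_mult av_power)
      also have "\<dots> \<le> av (g$m) * \<sigma>^m"
        using bd_power[OF small av_nonneg, of m] unfolding bd_def by (intro mult_left_mono) auto
      also have "\<dots> \<le> e"
      proof -
        have "\<bar>av (g$m) * \<sigma> ^ m * 1\<bar> \<le> e" using M that by blast
        thus ?thesis by simp
      qed
      finally show ?thesis .
    qed (use e in \<open>simp add: w_def\<close>)
    thus "\<exists>M. \<forall>m\<ge>M. \<forall>n. av (w m n) \<le> e" by blast
  qed
  moreover have "(\<Sum>m\<le>n. w m n) = (g oo h)$n * x^n" for n
    unfolding w_def fps_compose_nth atMost_atLeast0[symmetric] sum_distrib_right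
    by (intro sum.cong refl) (auto simp: algebra_simps)
  moreover have "ksum av r = ev av g (ev av h x)"
  proof -
    have "r = (\<lambda>n. g$n * (ev av h x)^n)" by (simp add: r_def fun_eq_iff)
    thus ?thesis by (simp only: ev_def[of av g])
  qed
  ultimately have "kconv av (\<lambda>N. \<Sum>n<N. (g oo h)$n * x^n) (ev av g (ev av h x))" by simp
  thus ?thesis unfolding ev_def[of av "g oo h"] by (rule ksum_eq)
qed

end


context nak
begin

lemma term_bound2:
  assumes "0 \<le> R" "av c \<le> R"
  shows "av (of_nat (m choose n) * h$m * c^(m-n)) * R ^ n \<le> av (h$m) * R^m"
proof (cases "n \<le> m")
  case True
  have "av (of_nat (m choose n) * h$m * c^(m-n)) * R ^ n
        = av (of_nat (m choose n) :: 'k) * (av (h$m) * (av c ^ (m-n) * R ^ n))"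
    by (simp add: av_mult av_power)
  also have "\<dots> \<le> 1 * (av (h$m) * (R ^ (m-n) * R ^ n))"
    using assms by (intro mult_mono av_of_nat_le mult_left_mono power_mono) (auto intro: mult_nonneg_nonneg)
  also have "\<dots> = av (h$m) * R^m" using True by (simp add: power_add[symmetric])
  finally show ?thesis .
qed (simp add: mult_nonneg_nonneg assms binomial_eq_0)

lemma term_bound:
  assumes "0 \<le> R" "av c \<le> R" "av y \<le> R"
  shows "av (of_nat (m choose n) * h$m * c^(m-n)) * av y ^ n \<le> av (h$m) * R^m"
proof -
  have "av (of_nat (m choose n) * h$m * c^(m-n)) * av y ^ n \<le> av (of_nat (m choose n) * h$m * c^(m-n)) * R ^ n"
    using assms by (intro mult_left_mono power_mono) auto
  also have "\<dots> \<le> av (h$m) * R^m" by (rule term_bound2[OF assms(1,2)])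
  finally show ?thesis .
qed

lemma expand_nth: "(expand_at av h c)$n = ksum av (\<lambda>m. of_nat (m choose n) * h$m * c^(m-n))"
  by (simp add: expand_at_def)

lemma expand_terms0:
  assumes "tz h R" "0 < R" "av c \<le> R"
  shows "(\<lambda>m. av (of_nat (m choose n) * h$m * c^(m-n))) \<longlonglongrightarrow> 0"
proof -
  have "(\<lambda>m. av (h$m) * R^m / R^n) \<longlonglongrightarrow> 0"
    using assms(1) unfolding tz_def by (rule tendsto_divide_zero)
  moreover have "av (of_nat (m choose n) * h$m * c^(m-n)) \<le> av (h$m) * R^m / R^n" for m
    using term_bound2[OF less_imp_le[OF assms(2)] assms(3), of m n h] assms(2)
    by (simp add: field_simps)
  ultimately show ?thesis by (rule squeeze0) simp
qed

lemma expand_conv: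
  assumes "tz h R" "0 < R" "av c \<le> R"
  shows "kconv av (\<lambda>N. \<Sum>m<N. of_nat (m choose n) * h$m * c^(m-n)) ((expand_at av h c)$n)"
  unfolding expand_nth by (rule terms0_conv[OF expand_terms0[OF assms]])

lemma expand_bd:
  assumes "tz h R" "0 < R" "av c \<le> R" "bd h R B"
  shows "bd (expand_at av h c) R B"
  unfolding bd_def
proof
  fix n
  have B: "0 \<le> B" using bd_nonneg[OF assms(4)] .
  have "av ((expand_at av h c)$n) \<le> B / R^n"
  proof (rule kconv_bound[OF expand_conv[OF assms(1-3)]], rule always_eventually, rule allI)
    fix N
    show "av (\<Sum>m<N. of_nat (m choose n) * h$m * c^(m-n)) \<le> B / R^n"
    proof (rule av_sum_le)
      show "0 \<le> B / R^n" using B assms(2) by simp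
      fix m
      have "av (of_nat (m choose n) * h$m * c^(m-n)) * R ^ n \<le> av (h$m) * R^m"
        by (rule term_bound2[OF less_imp_le[OF assms(2)] assms(3)])
      also have "\<dots> \<le> B" using assms(4) unfolding bd_def by blast
      finally show "av (of_nat (m choose n) * h$m * c^(m-n)) \<le> B / R^n"
        using assms(2) by (simp add: field_simps)
    qed
  qed
  thus "av ((expand_at av h c)$n) * R^n \<le> B" using assms(2) by (simp add: field_simps)
qed

lemma reexp:
  assumes h: "tz h R" and R: "0 < R" and c: "av c \<le> R" and y: "av y \<le> R"
  shows "ev av h (c + y) = ev av (expand_at av h c) y"
proof -
  define w where "w n m = of_nat (m choose n) * h$m * c^(m-n) * y^n" for n m
  define r where "r n = (expand_at av h c)$n * y^n" for n
  have "kconv av (\<lambda>N. \<Sum>m<N. \<Sum>n\<le>m. w n m) (ksum av r)"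
  proof (rule fubini)
    show "\<And>n m. m < n \<Longrightarrow> w n m = 0" by (simp add: w_def binomial_eq_0)
    fix n
    show "kconv av (\<lambda>N. \<Sum>m<N. w n m) (r n)"
      using kconv_cmult[OF expand_conv[OF h R c, of n], of "y^n"]
      by (simp add: w_def r_def sum_distrib_left sum_distrib_right mult.commute)
  next
    fix e :: real assume e: "e > 0"
    have "(\<lambda>k. av (h$k) * R ^ k) \<longlonglongrightarrow> 0" using h by (simp add: tz_def)
    from lim0_mult_small[OF this e, of 1] obtain M where M: "\<forall>k\<ge>M. \<bar>av (h$k) * R ^ k * 1\<bar> \<le> e" by blast
    have "av (w n m) \<le> e" if "n \<ge> M" for n m
    proof (cases "n \<le> m")
      case True
      have "av (w n m) \<le> av (h$m) * R^m"
        using term_bound[OF less_imp_le[OF R] c y, of m n h] by (simp add: w_def av_mult av_power)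
      also have "\<dots> \<le> e"
      proof -
        have "\<bar>av (h$m) * R ^ m * 1\<bar> \<le> e" using M that True by simp
        thus ?thesis by simp
      qed
      finally show ?thesis .
    qed (use e in \<open>simp add: w_def binomial_eq_0\<close>)
    thus "\<exists>M. \<forall>n\<ge>M. \<forall>m. av (w n m) \<le> e" by blast
  qed
  moreover have "(\<Sum>n\<le>m. w n m) = h$m * (c + y)^m" for m
  proof -
    have "(c + y)^m = (y + c)^m" by (simp add: add.commute)
    also have "\<dots> = (\<Sum>n\<le>m. of_nat (m choose n) * y^n * c^(m-n))" by (rule binomial_ring)
    finally show ?thesis by (simp add: w_def sum_distrib_left algebra_simps)
  qed
  moreover have "ksum av r = ev av (expand_at av h c) y"
  proof -
    have "r = (\<lambda>n. (expand_at av h c)$n * y^n)" by (simp add: r_def fun_eq_iff)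
    thus ?thesis by (simp only: ev_def)
  qed
  ultimately have "kconv av (\<lambda>N. \<Sum>m<N. h$m * (c + y)^m) (ev av (expand_at av h c) y)" by simp
  thus ?thesis unfolding ev_def[of av h] by (rule ksum_eq)
qed

lemma tz_deriv:
  assumes "tz h R" "0 < R"
  shows "tz (fps_deriv h) R"
proof -
  have "(\<lambda>m. av (h$(Suc m)) * R^(Suc m)) \<longlonglongrightarrow> 0"
    using assms(1) unfolding tz_def by (rule LIMSEQ_Suc)
  hence "(\<lambda>m. av (h$(Suc m)) * R^(Suc m) / R) \<longlonglongrightarrow> 0" by (rule tendsto_divide_zero)
  moreover have "av ((fps_deriv h)$m) * R^m \<le> av (h$(Suc m)) * R^(Suc m) / R" for m
  proof -
    have "av ((fps_deriv h)$m) * R^m = av (of_nat (m+1) :: 'k) * (av (h$(Suc m)) * R^m)"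
      by (simp add: fps_deriv_nth av_mult del: of_nat_Suc)
    also have "\<dots> \<le> 1 * (av (h$(Suc m)) * R^m)"
      by (intro mult_right_mono av_of_nat_le) (use assms in auto)
    also have "\<dots> = av (h$(Suc m)) * R^(Suc m) / R" using assms(2) by simp
    finally show ?thesis .
  qed
  ultimately show ?thesis unfolding tz_def by (rule squeeze0) (use assms(2) in simp)
qed

lemma expand_deriv:
  assumes h: "tz h R" and R: "0 < R" and c: "av c \<le> R"
  shows "expand_at av (fps_deriv h) c = fps_deriv (expand_at av h c)"
proof (rule fps_ext)
  fix n
  let ?t = "\<lambda>m. of_nat (m choose Suc n) * h$m * c^(m - Suc n)"
  have k1: "kconv av (\<lambda>N. \<Sum>m<N. ?t m) ((expand_at av h c)$(Suc n))"
    by (rule expand_conv[OF h R c])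
  have "kconv av (\<lambda>N. \<Sum>m<N + 1. ?t m) ((expand_at av h c)$(Suc n))"
    by (rule kconv_shift2[OF k1])
  moreover have "(\<Sum>m<N + 1. ?t m) = (\<Sum>m<N. ?t (Suc m))" for N
    by (simp only: Suc_eq_plus1[symmetric] sum.lessThan_Suc_shift) simp
  ultimately have k2: "kconv av (\<lambda>N. \<Sum>m<N. ?t (Suc m)) ((expand_at av h c)$(Suc n))" by simp
  have "kconv av (\<lambda>N. of_nat (Suc n) * (\<Sum>m<N. ?t (Suc m))) (of_nat (Suc n) * (expand_at av h c)$(Suc n))"
    by (rule kconv_cmult[OF k2])
  moreover have key: "of_nat (Suc n) * ?t (Suc m) = of_nat (m choose n) * (fps_deriv h)$m * c^(m-n)" for m
  proof -
    have "(of_nat (Suc n * (Suc m choose Suc n)) :: 'k) = of_nat (Suc m * (m choose n))"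
      by (simp only: Suc_times_binomial)
    hence "(of_nat (Suc n) :: 'k) * of_nat (Suc m choose Suc n) = of_nat (Suc m) * of_nat (m choose n)"
      by (simp only: of_nat_mult)
    have "of_nat (Suc n) * ?t (Suc m) = (of_nat (Suc n) * of_nat (Suc m choose Suc n)) * (h$(Suc m) * c^(m-n))"
      by (simp del: binomial_Suc_Suc of_nat_Suc add: mult.assoc mult.left_commute)
    also have "\<dots> = (of_nat (Suc m) * of_nat (m choose n)) * (h$(Suc m) * c^(m-n))"
      by (simp only: \<open>(of_nat (Suc n) :: 'k) * of_nat (Suc m choose Suc n) = of_nat (Suc m) * of_nat (m choose n)\<close>)
    also have "\<dots> = of_nat (m choose n) * (fps_deriv h)$m * c^(m-n)"
      by (simp add: fps_deriv_nth algebra_simps del: of_nat_Suc binomial_Suc_Suc)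
    finally show ?thesis .
  qed
  moreover have "(\<lambda>N. of_nat (Suc n) * (\<Sum>m<N. ?t (Suc m))) = (\<lambda>N. \<Sum>m<N. of_nat (m choose n) * (fps_deriv h)$m * c^(m-n))"
    by (simp only: sum_distrib_left key)
  ultimately have "kconv av (\<lambda>N. \<Sum>m<N. of_nat (m choose n) * (fps_deriv h)$m * c^(m-n))
                      (of_nat (Suc n) * (expand_at av h c)$(Suc n))"
    by simp
  hence "ksum av (\<lambda>m. of_nat (m choose n) * (fps_deriv h)$m * c^(m-n)) = of_nat (Suc n) * (expand_at av h c)$(Suc n)"
    by (rule ksum_eq)
  thus "(expand_at av (fps_deriv h) c)$n = (fps_deriv (expand_at av h c))$n"
    by (simp add: expand_nth fps_deriv_nth del: of_nat_Suc)
qed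

end


context nak
begin

lemma ident:
  assumes bda: "bd a \<rho> B" and rho: "0 < \<rho>" and eps: "0 < \<epsilon>"
    and z: "\<And>x. av x < \<epsilon> \<Longrightarrow> ev av a x = 0"
    and pi: "0 < av \<pi>" "av \<pi> < 1"
  shows "a = 0"
proof (rule ccontr)
  assume a0: "a \<noteq> 0"
  define n0 where "n0 = subdegree a"
  have an0: "a$n0 \<noteq> 0" using a0 by (simp add: n0_def)
  have alow: "n < n0 \<Longrightarrow> a$n = 0" for n by (auto simp: n0_def)
  have B: "0 \<le> B" using bd_nonneg[OF bda] .
  define t where "t = min \<epsilon> (min \<rho> (av (a$n0) * \<rho>^(Suc n0) / (B+1)))"
  have t: "0 < t" using eps rho an0 B av_pos[OF an0] by (simp add: t_def)
  obtain N where N: "av \<pi> ^ N < t" using real_arch_pow_inv[OF t pi(2)] by blast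
  define x where "x = \<pi> ^ N"
  define s where "s = av x"
  have s: "s = av \<pi> ^ N" by (simp add: s_def x_def av_power)
  have s0: "0 < s" using s pi by simp
  have st: "s < t" using s N by simp
  have seps: "s < \<epsilon>" and srho: "s < \<rho>" and sB: "s * (B+1) < av (a$n0) * \<rho>^(Suc n0)"
    using st B by (auto simp: t_def field_simps)
  define K where "K = B * (s/\<rho>)^(Suc n0)"
  have K0: "0 \<le> K" using B s0 rho by (simp add: K_def)
  have termK: "av (a$n * x^n) \<le> K" if "n \<noteq> n0" for n
  proof (cases "n < n0")
    case True thus ?thesis using alow K0 by simp
  next
    case False
    hence n: "Suc n0 \<le> n" using that by simp
    have "av (a$n * x^n) = (av (a$n) * \<rho>^n) * (s/\<rho>)^n"
      using rho by (simp add: av_mult av_power s_def power_divide)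
    also have "\<dots> \<le> B * (s/\<rho>)^n"
      using bda s0 rho unfolding bd_def by (intro mult_right_mono) auto
    also have "\<dots> \<le> B * (s/\<rho>)^(Suc n0)"
      using B s0 srho rho n by (intro mult_left_mono power_decreasing) auto
    finally show ?thesis by (simp add: K_def)
  qed
  have Klt: "K < av (a$n0 * x^n0)"
  proof -
    have "K = (B * s) * (s^n0 / \<rho>^(Suc n0))" by (simp add: K_def power_divide field_simps)
    also have "\<dots> < (av (a$n0) * \<rho>^(Suc n0)) * (s^n0 / \<rho>^(Suc n0))"
      using sB s0 rho B by (intro mult_strict_right_mono) (auto simp: field_simps)
    also have "\<dots> = av (a$n0 * x^n0)" using rho by (simp add: av_mult av_power s_def)
    finally show ?thesis .
  qed
  have tza: "tz a (av x)" using bd_tz[OF bda] srho s_def by simp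
  have conv: "kconv av (\<lambda>M. (\<Sum>n<M. a$n * x^n) - a$n0 * x^n0) (ev av a x - a$n0 * x^n0)"
    by (rule kconv_diff[OF ev_conv[OF tza] kconv_const])
  have "av (ev av a x - a$n0 * x^n0) \<le> K"
  proof (rule kconv_bound[OF conv], unfold eventually_sequentially, intro exI allI impI)
    fix M assume "Suc n0 \<le> M"
    hence "n0 \<in> {..<M}" by simp
    hence "(\<Sum>n<M. a$n * x^n) - a$n0 * x^n0 = (\<Sum>n\<in>{..<M} - {n0}. a$n * x^n)"
      by (simp add: sum.remove)
    also have "av \<dots> \<le> K" using termK K0 by (intro av_sum_le) auto
    finally show "av ((\<Sum>n<M. a$n * x^n) - a$n0 * x^n0) \<le> K" .
  qed
  moreover have "ev av a x = 0" using z seps s_def by simp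
  ultimately show False using Klt by simp
qed

lemma small_bd:
  assumes A: "bd A R BA" and A0: "A$0 = 0" and R: "0 < R" and sig: "0 < \<sigma>"
  shows "\<exists>\<tau>>0. \<tau> \<le> R \<and> bd A \<tau> \<sigma>"
proof -
  have BA: "0 \<le> BA" using bd_nonneg[OF A] .
  define \<tau> where "\<tau> = R * (\<sigma> / (BA + \<sigma>))"
  have q: "0 < \<sigma> / (BA + \<sigma>)" "\<sigma> / (BA + \<sigma>) \<le> 1" using BA sig by auto
  have tau1: "0 < \<tau>" unfolding \<tau>_def by (rule mult_pos_pos[OF R q(1)])
  have tau2: "\<tau> \<le> R" unfolding \<tau>_def using mult_left_mono[OF q(2), of R] R by simp
  note tau = tau1 tau2
  have "av (A$k) * \<tau>^k \<le> \<sigma>" for k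
  proof (cases k)
    case 0 thus ?thesis using A0 sig by simp
  next
    case (Suc k')
    have tk: "\<tau>^k = R^k * (\<sigma> / (BA + \<sigma>))^k" unfolding \<tau>_def by (rule power_mult_distrib)
    have "av (A$k) * \<tau>^k = (av (A$k) * R^k) * (\<sigma> / (BA + \<sigma>))^k"
      by (simp only: tk mult.assoc)
    also have "\<dots> \<le> BA * (\<sigma> / (BA + \<sigma>))^k"
      using A q unfolding bd_def by (intro mult_right_mono) auto
    also have "\<dots> \<le> BA * (\<sigma> / (BA + \<sigma>))^1"
      using BA q Suc by (intro mult_left_mono power_decreasing) auto
    also have "\<dots> \<le> \<sigma>" using BA sig by (simp add: field_simps)
    finally show ?thesis .
  qed
  thus ?thesis using tau unfolding bd_def by blast
qed

lemma ev_bound: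
  assumes "bd A t \<sigma>" "av x \<le> t" "tz A (av x)"
  shows "av (ev av A x) \<le> \<sigma>"
proof (rule kconv_bound[OF ev_conv[OF assms(3)]], rule always_eventually, rule allI)
  fix N
  show "av (\<Sum>n<N. A$n * x^n) \<le> \<sigma>"
  proof (rule av_sum_le)
    show "0 \<le> \<sigma>" using bd_nonneg[OF assms(1)] .
    fix n
    have "av (A$n * x^n) \<le> av (A$n) * t^n"
      by (simp add: av_mult av_power) (intro mult_left_mono power_mono, use assms(2) in auto)
    thus "av (A$n * x^n) \<le> \<sigma>" using assms(1) unfolding bd_def by (meson order_trans)
  qed
qed

definition Rad :: "bool \<Rightarrow> 'k \<Rightarrow> real" where
  "Rad cl c = (if cl then 1 else (1 + av c) / 2)"

lemma Rad_props:
  assumes "c \<in> udisc av cl"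
  shows "0 < Rad cl c" "av c \<le> Rad cl c" "Rad cl c \<le> 1"
proof -
  have "0 < 1 + av c" using av_nonneg[of c] by linarith
  thus "0 < Rad cl c" "av c \<le> Rad cl c" "Rad cl c \<le> 1"
    using assms by (auto simp: Rad_def udisc_def split: if_splits)
qed

lemma odisc_tz:
  assumes "h \<in> Odisc av cl" "c \<in> udisc av cl"
  shows "tz h (Rad cl c)"
proof (cases cl)
  case True thus ?thesis using assms by (simp add: Odisc_def tz_def Rad_def)
next
  case False
  hence "av c < 1" using assms(2) by (simp add: udisc_def)
  hence "0 \<le> (1 + av c) / 2 \<and> (1 + av c) / 2 < 1" using av_nonneg[of c] by simp
  moreover have "0 < 1 + av c" using av_nonneg[of c] by linarith
  ultimately show ?thesis using assms(1) False by (simp add: Odisc_def tz_def Rad_def conv_rad_def)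
qed

lemma udisc_add:
  assumes "c \<in> udisc av cl" "av y < 1"
  shows "c + y \<in> udisc av cl"
proof -
  have "av (c + y) \<le> max (av c) (av y)" by (rule av_ultra)
  thus ?thesis using assms by (auto simp: udisc_def split: if_splits)
qed

lemma expand_nth0: "(expand_at av h c)$0 = ev av h c"
  by (simp add: expand_nth ev_def)

end


lemma fps_inv_0: "(fps_inv A) $ 0 = (0 :: 'a::field)"
  by (simp add: fps_inv_def)

lemma cX_compose:
  fixes G :: "'a::field fps"
  assumes "G$0 = 0" shows "(fps_const c + fps_X) oo G = fps_const c + G"
  using assms by (simp add: fps_compose_add_distrib)

lemma formal_a:
  fixes A :: "'a::field fps"
  assumes A0: "A$0 = 0" and A1: "A$1 \<noteq> 0"
    and eq: "(\<Sum>m<d. (Pt m oo A) * (fps_const c + fps_X)^m) + (fps_const c + fps_X)^d = 0"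
  shows "(\<Sum>m<d. Pt m * (fps_const c + fps_inv A)^m) + (fps_const c + fps_inv A)^d = 0"
proof -
  define G where "G = fps_inv A"
  have G0: "G$0 = 0" by (simp add: G_def fps_inv_0)
  have AG: "A oo G = fps_X" unfolding G_def by (rule fps_inv_right[OF A0 A1])
  have PA: "(Pt m oo A) oo G = Pt m" for m
    using fps_compose_assoc[OF G0 A0, of "Pt m"] AG by simp
  have "((\<Sum>m<d. (Pt m oo A) * (fps_const c + fps_X)^m) + (fps_const c + fps_X)^d) oo G = 0"
    using eq by simp
  hence "(\<Sum>m<d. Pt m * (fps_const c + G)^m) + (fps_const c + G)^d = 0"
    by (simp add: fps_compose_add_distrib fps_compose_sum_distrib fps_compose_mult_distrib[OF G0]
        fps_compose_power[OF G0, symmetric] cX_compose[OF G0] PA G0)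
  thus ?thesis by (simp add: G_def)
qed

lemma formal_b:
  fixes A :: "'a::field fps"
  assumes A0: "A$0 = 0" and A1: "A$1 \<noteq> 0"
    and eq: "fps_deriv A * (\<Sum>m<d. (Ct m oo A) * (fps_const c + fps_X)^m) = of_nat j * (fps_const c + fps_X)^(j - 1)"
  shows "(\<Sum>m<d. Ct m * (fps_const c + fps_inv A)^m)
         = of_nat j * (fps_const c + fps_inv A)^(j - 1) * fps_deriv (fps_const c + fps_inv A)"
proof -
  define G where "G = fps_inv A"
  define u where "u = fps_const c + G"
  have G0: "G$0 = 0" by (simp add: G_def fps_inv_0)
  have AG: "A oo G = fps_X" unfolding G_def by (rule fps_inv_right[OF A0 A1])
  have PA: "(Ct m oo A) oo G = Ct m" for m
    using fps_compose_assoc[OF G0 A0, of "Ct m"] AG by simp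
  have ch: "(fps_deriv A oo G) * fps_deriv G = 1"
    using fps_compose_deriv[OF G0, of A] AG by simp
  have "(fps_deriv A * (\<Sum>m<d. (Ct m oo A) * (fps_const c + fps_X)^m)) oo G
        = (of_nat j * (fps_const c + fps_X)^(j - 1)) oo G"
    using eq by simp
  hence e2: "(fps_deriv A oo G) * (\<Sum>m<d. Ct m * u^m) = of_nat j * u^(j - 1)"
    by (simp add: fps_compose_add_distrib fps_compose_sum_distrib fps_compose_mult_distrib[OF G0]
        fps_compose_power[OF G0, symmetric] cX_compose[OF G0] PA u_def fps_of_nat[symmetric] G0)
  have "(\<Sum>m<d. Ct m * u^m) = ((fps_deriv A oo G) * fps_deriv G) * (\<Sum>m<d. Ct m * u^m)"
    by (simp add: ch)
  also have "\<dots> = fps_deriv G * ((fps_deriv A oo G) * (\<Sum>m<d. Ct m * u^m))"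
    by (simp add: algebra_simps)
  also have "\<dots> = of_nat j * u^(j - 1) * fps_deriv u" by (simp only: e2) (simp add: u_def)
  finally show ?thesis by (simp add: u_def G_def)
qed

lemma roots_unique:
  fixes Q :: "'a::idom poly"
  assumes Q: "Q \<noteq> 0" "degree Q \<le> d"
    and r: "inj_on r {..<d}" "\<And>i. i < d \<Longrightarrow> poly Q (r i) = 0"
    and v: "poly Q v = 0"
  shows "\<exists>i<d. v = r i"
proof (rule ccontr)
  assume nv: "\<not> (\<exists>i<d. v = r i)"
  have sub: "insert v (r ` {..<d}) \<subseteq> {x. poly Q x = 0}" using r v by auto
  have "card (insert v (r ` {..<d})) = Suc d"
    using nv r(1) by (subst card_insert_disjoint) (auto simp: card_image)
  moreover have "card (insert v (r ` {..<d})) \<le> card {x. poly Q x = 0}"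
    by (rule card_mono[OF poly_roots_finite[OF Q(1)] sub])
  moreover have "card {x. poly Q x = 0} \<le> degree Q" by (rule card_poly_roots_bound[OF Q(1)])
  ultimately show False using Q(2) by simp
qed

definition mpoly :: "nat \<Rightarrow> (nat \<Rightarrow> 'a::comm_ring_1) \<Rightarrow> 'a poly" where
  "mpoly d P = monom 1 d + (\<Sum>m<d. monom (P m) m)"

lemma mpoly_poly: "poly (mpoly d P) x = (\<Sum>m<d. P m * x^m) + x^d"
  by (simp add: mpoly_def poly_sum poly_monom)

lemma mpoly_coeff_d: "coeff (mpoly d P) d = 1"
  by (simp add: mpoly_def coeff_sum)

lemma mpoly_ne: "mpoly d (P :: nat \<Rightarrow> 'a::idom) \<noteq> 0"
  using mpoly_coeff_d[of d P] by auto

lemma mpoly_degree: "degree (mpoly d P) \<le> d"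
  unfolding mpoly_def
  by (intro degree_add_le degree_monom_le degree_sum_le) (auto intro: order_trans[OF degree_monom_le])



lemma lagrange_V:
  fixes u :: "nat \<Rightarrow> 'a::field fps" and V :: "nat \<Rightarrow> nat \<Rightarrow> 'a fps"
  assumes inj: "inj_on u {..<d}"
    and inv_V: "\<forall>i<d. \<forall>j<d. (\<Sum>l<d. u i ^ l * V l j) = (if i = j then 1 else 0)"
    and j: "j < d" and l: "l < d"
  shows "(\<Prod>m\<in>{..<d}-{j}. (u j - u m)) * V l j = coeff (\<Prod>m\<in>{..<d}-{j}. [:- u m, 1:]) l"
proof -
  define Q where "Q = (\<Sum>l<d. monom (V l j) l)"
  define D where "D = (\<Prod>m\<in>{..<d}-{j}. (u j - u m))"
  define N where "N = (\<Prod>m\<in>{..<d}-{j}. [:- u m, 1:])"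
  define R where "R = smult D Q - N"
  have dQ: "degree Q \<le> d - 1" unfolding Q_def
    by (intro degree_sum_le) (auto intro: order_trans[OF degree_monom_le])
  have "degree N \<le> (\<Sum>m\<in>{..<d}-{j}. degree [:- u m, 1:])"
    unfolding N_def using degree_prod_sum_le[of "{..<d}-{j}" "\<lambda>m. [:- u m, 1:]"] by (simp add: o_def)
  also have "\<dots> = d - 1" using j by simp
  finally have dN: "degree N \<le> d - 1" .
  have dR: "degree R \<le> d - 1" unfolding R_def
    using degree_diff_le[of "smult D Q" "d - 1" N] degree_smult_le[of D Q] dQ dN by linarith
  have pQ: "poly Q (u i) = (if i = j then 1 else 0)" if "i < d" for i
  proof -
    have "poly Q (u i) = (\<Sum>l<d. u i ^ l * V l j)"
      by (simp add: Q_def poly_sum poly_monom mult.commute)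
    thus ?thesis using inv_V that j by simp
  qed
  have pN: "poly N (u i) = (\<Prod>m\<in>{..<d}-{j}. (u i - u m))" for i
    by (simp add: N_def poly_prod)
  have roots: "poly R (u i) = 0" if "i < d" for i
  proof (cases "i = j")
    case True thus ?thesis using pQ[OF that] by (simp add: R_def pN D_def)
  next
    case False
    have "(\<Prod>m\<in>{..<d}-{j}. (u i - u m)) = 0"
      using False that by (intro prod_zero) auto
    thus ?thesis using pQ[OF that] False by (simp add: R_def pN)
  qed
  have R0: "R = 0"
  proof (rule ccontr)
    assume R: "R \<noteq> 0"
    have "u ` {..<d} \<subseteq> {x. poly R x = 0}" using roots by auto
    hence "card (u ` {..<d}) \<le> card {x. poly R x = 0}"
      by (rule card_mono[OF poly_roots_finite[OF R]])
    also have "\<dots> \<le> degree R" by (rule card_poly_roots_bound[OF R])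
    finally have "d \<le> degree R" using card_image[OF inj] by simp
    thus False using dR j by linarith
  qed
  have "coeff (smult D Q) l = coeff N l" using R0 by (simp add: R_def)
  moreover have "coeff Q l = V l j" using l by (simp add: Q_def coeff_sum)
  ultimately show ?thesis by (simp add: D_def N_def)
qed

context nak
begin

lemma good_common:
  "finite S \<Longrightarrow> (\<And>i. i \<in> S \<Longrightarrow> \<exists>\<rho>>0. good (f i) \<rho>) \<Longrightarrow> \<exists>\<rho>>0. \<forall>i\<in>S. good (f i) \<rho>"
proof (induct S rule: finite_induct)
  case empty show ?case by (rule exI[of _ 1]) simp
next
  case (insert x F)
  then obtain r1 where r1: "r1 > 0" "\<forall>i\<in>F. good (f i) r1" by auto
  obtain r2 where r2: "r2 > 0" "good (f x) r2" using insert by auto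
  show ?case
    using r1 r2 by (intro exI[of _ "min r1 r2"]) (auto intro: good_mono)
qed

lemma good_coeff_prod:
  "(\<And>m. m \<in> S \<Longrightarrow> good (u m) \<rho>) \<Longrightarrow> 0 \<le> \<rho> \<Longrightarrow> good (coeff (\<Prod>m\<in>S. [:- u m, 1:]) l) \<rho>"
proof (induct S arbitrary: l rule: infinite_finite_induct)
  case (infinite S) thus ?case by (cases l) (auto simp: good_one good_const[of 0, simplified])
next
  case empty thus ?case by (cases l) (auto simp: good_one good_const[of 0, simplified])
next
  case (insert x F)
  have e: "[:- u x, 1:] * P = smult (- u x) P + pCons 0 P" for P :: "'k fps poly"
    by simp
  have gx: "good (u x) \<rho>" using insert by simp
  have gF: "good (coeff (\<Prod>m\<in>F. [:- u m, 1:]) k) \<rho>" for k using insert by simp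
  show ?case
    using insert(1,2) gx gF insert.prems(2)
    by (cases l) (auto simp: e coeff_pCons intro!: good_add good_mult good_uminus good_diff)
qed

lemma inverse_good:
  assumes g: "good D \<rho>" and rho: "0 < \<rho>" and D0: "D$0 \<noteq> 0"
  shows "\<exists>\<rho>'>0. good (inverse D) \<rho>'"
proof -
  obtain B where bD: "bd D \<rho> B" using g good_def by blast
  define A where "A = D - fps_const (D$0)"
  have A0: "A$0 = 0" by (simp add: A_def)
  have bA: "bd A \<rho> (max B (av (D$0)))" unfolding A_def diff_conv_add_uminus
    by (rule bd_add[OF bD bd_uminus[OF bd_const]]) (use rho in simp)
  define \<sigma> where "\<sigma> = av (D$0)"
  have sig: "0 < \<sigma>" using av_pos[OF D0] by (simp add: \<sigma>_def)
  obtain \<tau> where tau: "0 < \<tau>" "\<tau> \<le> \<rho>" "bd A \<tau> \<sigma>" using small_bd[OF bA A0 rho sig] by blast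
  have Dk: "av (D$k) * \<tau>^k \<le> \<sigma>" for k
  proof (cases k)
    case 0 thus ?thesis by (simp add: \<sigma>_def)
  next
    case (Suc k')
    have "av (A$k) * \<tau>^k \<le> \<sigma>" using tau(3) unfolding bd_def by blast
    moreover have "A$k = D$k" using Suc by (simp add: A_def)
    ultimately show ?thesis by simp
  qed
  define b where "b = inverse D"
  have Db: "D * b = 1" unfolding b_def by (rule inverse_mult_eq_1'[OF D0])
  have claim: "av (b$n) * \<tau>^n \<le> 1 / \<sigma>" for n
  proof (induct n rule: less_induct)
    case (less n)
    have eq: "(D * b)$n = D$0 * b$n + (\<Sum>i\<in>{Suc 0..n}. D$i * b$(n-i))"
      by (simp add: fps_mult_nth sum.atLeast_Suc_atMost)
    show ?case
    proof (cases n)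
      case 0
      have "D$0 * b$0 = 1" using Db eq 0 by simp
      hence "av (D$0) * av (b$0) = 1" by (metis av_1 av_mult)
      thus ?thesis using 0 sig by (simp add: \<sigma>_def field_simps)
    next
      case (Suc n')
      have o: "(1::'k fps)$n = 0" using Suc by simp
      have "D$0 * b$n + (\<Sum>i\<in>{Suc 0..n}. D$i * b$(n-i)) = 0" using eq Db o by metis
      hence "D$0 * b$n = - (\<Sum>i\<in>{Suc 0..n}. D$i * b$(n-i))" by (rule eq_neg_iff_add_eq_0[THEN iffD2])
      hence "av (D$0 * b$n) * \<tau>^n = av (\<Sum>i\<in>{Suc 0..n}. D$i * b$(n-i)) * \<tau>^n" by simp
      also have "\<dots> \<le> 1"
      proof (rule av_sum_le_w)
        show "0 \<le> \<tau>^n" using tau by simp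
        fix i assume i: "i \<in> {Suc 0..n}"
        have "av (D$i * b$(n-i)) * \<tau>^n = (av (D$i) * \<tau>^i) * (av (b$(n-i)) * \<tau>^(n-i))"
          using i by (simp add: av_mult power_add[symmetric])
        also have "\<dots> \<le> \<sigma> * (1 / \<sigma>)"
          using Dk less i sig tau(1) by (intro mult_mono) auto
        also have "\<dots> = 1" using sig by simp
        finally show "av (D$i * b$(n-i)) * \<tau>^n \<le> 1" .
      qed simp
      finally have "\<sigma> * (av (b$n) * \<tau>^n) \<le> 1" by (simp add: av_mult \<sigma>_def mult.assoc)
      thus ?thesis using sig by (simp add: field_simps)
    qed
  qed
  hence "bd b \<tau> (1 / \<sigma>)" unfolding bd_def by blast
  thus ?thesis using tau(1) unfolding good_def b_def by blast
qed

lemma inv_good: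
  assumes A0: "A$0 = 0" and A1: "A$1 \<noteq> 0" and bA: "bd A \<rho> B" and rho: "0 < \<rho>"
  shows "\<exists>\<rho>'>0. good (fps_inv A) \<rho>'"
proof -
  define a1 where "a1 = av (A$1)"
  have a1: "0 < a1" using av_pos[OF A1] by (simp add: a1_def)
  have B: "0 \<le> B" using bd_nonneg[OF bA] .
  define t where "t = min 1 (min \<rho> (a1 * \<rho>^2 / (B+1)))"
  have t3: "t \<le> a1 * \<rho>^2 / (B+1)" by (simp add: t_def)
  have t4: "t * (B+1) \<le> a1 * \<rho>^2" using t3 B by (simp add: le_divide_eq)
  have "0 < t" "t \<le> 1" "t \<le> \<rho>"
    using a1 rho B by (auto simp: t_def)
  note t = this t4
  have bdA: "bd A t (a1 * t)" unfolding bd_def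
  proof
    fix k
    show "av (A$k) * t^k \<le> a1 * t"
    proof (cases "k \<le> 1")
      case True
      thus ?thesis using A0 a1 t by (cases k) (auto simp: a1_def)
    next
      case False
      have "av (A$k) * t^k = (av (A$k) * \<rho>^k) * (t/\<rho>)^k" using rho by (simp add: power_divide)
      also have "\<dots> \<le> B * (t/\<rho>)^k" using bA t rho unfolding bd_def by (intro mult_right_mono) auto
      also have "\<dots> \<le> B * (t/\<rho>)^2" using B t rho False by (intro mult_left_mono power_decreasing) auto
      also have "\<dots> = (B * t) * t / \<rho>^2" by (simp add: power2_eq_square)
      also have "\<dots> \<le> (a1 * \<rho>^2) * t / \<rho>^2"
        using t B rho by (intro divide_right_mono mult_right_mono) (auto simp: algebra_simps)
      also have "\<dots> = a1 * t" using rho by simp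
      finally show ?thesis .
    qed
  qed
  have pw: "av ((A^i)$n) * t^n \<le> (a1 * t)^i" for i n
    using bd_power[OF bdA less_imp_le[OF t(1)], of i] unfolding bd_def by blast
  define G where "G = fps_inv A"
  have Gn: "G$n = compinv A n" for n by (simp add: G_def fps_inv_def)
  have claim: "av (G$n) * (a1 * t)^n \<le> 1" for n
  proof (induct n rule: less_induct)
    case (less n)
    show ?case
    proof (cases n)
      case 0 thus ?thesis by (simp add: Gn)
    next
      case (Suc n')
      define S where "S = (\<Sum>i\<in>{0..n'}. G$i * (A^i)$n)"
      have Geq: "G$n = (fps_X$n - S) / (A$1)^n" by (simp add: Gn Suc S_def del: fps_X_nth)
      have g1: "av (G$n) = av (fps_X$n - S) / a1^n" unfolding Geq av_divide av_power a1_def ..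
      have "av (G$n) * (a1 * t)^n = av (fps_X$n - S) * t^n"
        using a1 by (simp add: g1 power_mult_distrib del: fps_X_nth)
      also have "\<dots> \<le> max (av (fps_X$n)) (av S) * t^n"
        using t by (intro mult_right_mono av_diff) auto
      also have "\<dots> = max (av (fps_X$n) * t^n) (av S * t^n)"
        using t by (simp add: max_mult_distrib_right)
      also have "\<dots> \<le> 1"
      proof (rule max.boundedI)
        show "av (fps_X$n) * t^n \<le> 1" using t by (auto simp: fps_X_nth intro: power_le_one)
        show "av S * t^n \<le> 1" unfolding S_def
        proof (rule av_sum_le_w)
          show "0 \<le> t^n" using t by simp
          fix i assume i: "i \<in> {0..n'}"
          have "av (G$i * (A^i)$n) * t^n = av (G$i) * (av ((A^i)$n) * t^n)" by (simp add: av_mult)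
          also have "\<dots> \<le> av (G$i) * (a1 * t)^i" by (intro mult_left_mono pw) simp
          also have "\<dots> \<le> 1" using less i Suc by simp
          finally show "av (G$i * (A^i)$n) * t^n \<le> 1" .
        qed simp
      qed
      finally show ?thesis .
    qed
  qed
  hence "bd G (a1 * t) 1" unfolding bd_def by blast
  moreover have "0 < a1 * t" using a1 t by simp
  ultimately show ?thesis unfolding good_def G_def by blast
qed

end


context nak
begin

lemma ev_cX: "ev av (fps_const c + fps_X) T = c + T"
proof -
  have "tz (fps_const c) (av T)" using good_tz[OF good_const[of c "av T + 1"], of T] by simp
  moreover have "tz fps_X (av T)" by (rule good_tz[OF good_X, of "av T + 1"]) simp_all
  ultimately show ?thesis by (simp add: ev_add ev_const ev_X)
qed

lemma good_cX: "0 \<le> \<rho> \<Longrightarrow> good (fps_const c + fps_X) \<rho>"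
  by (intro good_add good_const good_X)

lemma ev_cXpow: "av T < \<rho> \<Longrightarrow> ev av ((fps_const c + fps_X)^m) T = (c + T)^m"
proof -
  assume T: "av T < \<rho>"
  hence r: "0 \<le> \<rho>" using av_nonneg[of T] by linarith
  show ?thesis using ev_power_g[OF good_cX[OF r] T] by (simp add: ev_cX)
qed

lemma ev_term: "good g \<rho> \<Longrightarrow> av T < \<rho> \<Longrightarrow> ev av (g * (fps_const c + fps_X)^m) T = ev av g T * (c + T)^m"
proof -
  assume g: "good g \<rho>" and T: "av T < \<rho>"
  hence r: "0 \<le> \<rho>" using av_nonneg[of T] by linarith
  show ?thesis using ev_mult_g[OF g good_power[OF good_cX[OF r] r] T] ev_cXpow[OF T] by simp
qed

lemma branch:
  assumes phi: "finite_etale av cl f d" and P: "is_min_poly av cl f d P"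
    and C: "is_conn_matrix av cl f d C"
    and c: "c \<in> udisc av cl" and b: "b = ev av f c"
    and pi: "0 < av \<pi>" "av \<pi> < 1"
  defines "A \<equiv> expand_at av f c - fps_const b"
  shows "A$0 = 0" "A$1 \<noteq> 0"
    "(\<Sum>m<d. expand_at av (P m) b * (fps_const c + fps_inv A)^m) + (fps_const c + fps_inv A)^d = 0"
    "\<And>j. j < d \<Longrightarrow> (\<Sum>m<d. expand_at av (C j m) b * (fps_const c + fps_inv A)^m)
         = of_nat j * (fps_const c + fps_inv A)^(j - 1) * fps_deriv (fps_const c + fps_inv A)"
    "\<exists>\<rho>>0. good (fps_inv A) \<rho>"
proof -
  have fO: "f \<in> Odisc av cl" using phi by (simp add: finite_etale_def)
  have bU: "b \<in> udisc av cl" using phi c b by (simp add: finite_etale_def)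
  define R where "R = Rad cl c"
  define Rb where "Rb = Rad cl b"
  have R: "0 < R" "av c \<le> R" "R \<le> 1" using Rad_props[OF c] by (auto simp: R_def)
  have Rb: "0 < Rb" "av b \<le> Rb" "Rb \<le> 1" using Rad_props[OF bU] by (auto simp: Rb_def)
  have tzf: "tz f R" unfolding R_def by (rule odisc_tz[OF fO c])
  obtain Bf where bf: "bd f R Bf" using tz_bd[OF tzf] by blast
  define F where "F = expand_at av f c"
  have bF: "bd F R Bf" unfolding F_def by (rule expand_bd[OF tzf R(1,2) bf])
  have gF: "good F R" using bF good_def by blast
  have bA: "bd A R (max Bf (av b))" unfolding A_def F_def[symmetric] diff_conv_add_uminus
    by (rule bd_add[OF bF bd_uminus[OF bd_const]]) (use R in simp)
  show A0: "A$0 = 0" by (simp add: A_def expand_nth0 b)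
  have tzf': "tz (fps_deriv f) R" by (rule tz_deriv[OF tzf R(1)])
  have dF: "fps_deriv F = expand_at av (fps_deriv f) c"
    unfolding F_def by (rule expand_deriv[OF tzf R(1,2), symmetric])
  have dA: "fps_deriv A = fps_deriv F" by (simp add: A_def F_def)
  have "A$1 = (fps_deriv F)$0" by (simp add: A_def F_def)
  also have "\<dots> = ev av (fps_deriv f) c" by (simp only: dF expand_nth0)
  finally have A1eq: "A$1 = ev av (fps_deriv f) c" .
  obtain g where "\<forall>x\<in>udisc av cl. ev av (fps_deriv f) x * ev av g x = 1"
    using phi by (auto simp: finite_etale_def)
  hence "ev av (fps_deriv f) c \<noteq> 0" using c by (metis mult_zero_left zero_neq_one)
  thus A1: "A$1 \<noteq> 0" using A1eq by simp
  show "\<exists>\<rho>>0. good (fps_inv A) \<rho>" by (rule inv_good[OF A0 A1 bA R(1)])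
  define \<sigma> where "\<sigma> = Rb / 2"
  have sig: "0 < \<sigma>" "\<sigma> < Rb" using Rb by (auto simp: \<sigma>_def)
  obtain \<tau> where tau: "0 < \<tau>" "\<tau> \<le> R" "bd A \<tau> \<sigma>" using small_bd[OF bA A0 R(1) sig(1)] by blast
  have compgood: "good (expand_at av h b oo A) \<tau>" if h: "h \<in> Odisc av cl" for h
  proof -
    have th: "tz h Rb" unfolding Rb_def by (rule odisc_tz[OF h bU])
    obtain Bh where bh: "bd h Rb Bh" using tz_bd[OF th] by blast
    have "bd (expand_at av h b) Rb Bh" by (rule expand_bd[OF th Rb(1,2) bh])
    hence "bd (expand_at av h b) \<sigma> Bh" by (rule bd_mono) (use sig in auto)
    hence "bd (expand_at av h b oo A) \<tau> Bh" by (rule bd_compose[OF _ tau(3)]) (use tau in simp)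
    thus ?thesis using good_def by blast
  qed
  have evA: "ev av A T = ev av f (c + T) - b" and avA: "av (ev av A T) \<le> \<sigma>"
    if T: "av T < \<tau>" for T
  proof -
    have TR: "av T < R" using T tau by simp
    have "ev av A T = ev av F T - ev av (fps_const b) T"
      unfolding A_def F_def[symmetric] by (rule ev_diff_g[OF gF good_const TR])
    also have "ev av F T = ev av f (c + T)" unfolding F_def by (rule reexp[OF tzf R(1,2), symmetric]) (use TR in simp)
    finally show "ev av A T = ev av f (c + T) - b" by (simp add: ev_const)
    show "av (ev av A T) \<le> \<sigma>"
      by (rule ev_bound[OF tau(3)]) (use T tau bd_tz[OF bA] in auto)
  qed
  have comp: "ev av (expand_at av h b oo A) T = ev av h (ev av f (c + T))"
    if h: "h \<in> Odisc av cl" and T: "av T < \<tau>" for h T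
  proof -
    have th: "tz h Rb" unfolding Rb_def by (rule odisc_tz[OF h bU])
    obtain Bh where bh: "bd h Rb Bh" using tz_bd[OF th] by blast
    have bH: "bd (expand_at av h b) Rb Bh" by (rule expand_bd[OF th Rb(1,2) bh])
    have tH: "tz (expand_at av h b) \<sigma>" by (rule bd_tz[OF bH]) (use sig in auto)
    have sm: "bd A (av T) \<sigma>" by (rule bd_mono[OF tau(3)]) (use T in auto)
    have "ev av (expand_at av h b oo A) T = ev av (expand_at av h b) (ev av A T)"
      by (rule ev_compose[OF A0 bA _ tH sm]) (use T tau in simp)
    also have "\<dots> = ev av h (b + ev av A T)"
      by (rule reexp[OF th Rb(1,2), symmetric]) (use avA[OF T] sig in simp)
    also have "b + ev av A T = ev av f (c + T)" using evA[OF T] by simp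
    finally show ?thesis .
  qed
  have xU: "c + T \<in> udisc av cl" if "av T < \<tau>" for T
    by (rule udisc_add[OF c]) (use that tau R in simp)
  have fxU: "ev av f (c + T) \<in> udisc av cl" if "av T < \<tau>" for T
    using phi xU[OF that] by (simp add: finite_etale_def)
  have tau0: "0 \<le> \<tau>" using tau by simp
  define La where "La = (\<Sum>m<d. (expand_at av (P m) b oo A) * (fps_const c + fps_X)^m) + (fps_const c + fps_X)^d"
  have PO: "P m \<in> Odisc av cl" if "m < d" for m using P that by (simp add: is_min_poly_def)
  have gLa: "good La \<tau>" unfolding La_def
    by (intro good_add good_sum good_mult good_power good_cX compgood PO tau0) auto
  have "La = 0"
  proof -
    obtain B where "bd La \<tau> B" using gLa good_def by blast
    moreover have "ev av La T = 0" if T: "av T < \<tau>" for T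
    proof -
      have gt: "good ((expand_at av (P m) b oo A) * (fps_const c + fps_X)^m) \<tau>" if "m \<in> {..<d}" for m
        using that by (intro good_mult good_power good_cX compgood PO tau0) auto
      have "ev av La T = ev av (\<Sum>m<d. (expand_at av (P m) b oo A) * (fps_const c + fps_X)^m) T
                         + ev av ((fps_const c + fps_X)^d) T"
        unfolding La_def by (rule ev_add_g[OF good_sum[OF gt tau0] good_power[OF good_cX[OF tau0] tau0] T])
      also have "\<dots> = (\<Sum>m<d. ev av ((expand_at av (P m) b oo A) * (fps_const c + fps_X)^m) T) + (c + T)^d"
        by (simp only: ev_sum_g[OF gt T] ev_cXpow[OF T])
      also have "(\<Sum>m<d. ev av ((expand_at av (P m) b oo A) * (fps_const c + fps_X)^m) T)
                 = (\<Sum>m<d. ev av (P m) (ev av f (c + T)) * (c + T)^m)"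
        by (intro sum.cong refl) (simp add: ev_term[OF compgood[OF PO] T] comp[OF PO T])
      finally have "ev av La T = (\<Sum>m<d. ev av (P m) (ev av f (c + T)) * (c + T)^m) + (c + T)^d" .
      also have "\<dots> = 0" using P xU[OF T] by (simp add: is_min_poly_def)
      finally show ?thesis .
    qed
    ultimately show ?thesis using ident[OF _ tau(1) tau(1) _ pi] by blast
  qed
  thus "(\<Sum>m<d. expand_at av (P m) b * (fps_const c + fps_inv A)^m) + (fps_const c + fps_inv A)^d = 0"
    by (intro formal_a[OF A0 A1]) (simp add: La_def)
  fix j assume j: "j < d"
  have CO: "C j m \<in> Odisc av cl" if "m < d" for m using C that j by (simp add: is_conn_matrix_def)
  obtain Bf' where bf': "bd (fps_deriv f) R Bf'" using tz_bd[OF tzf'] by blast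
  have gdA: "good (fps_deriv A) R" unfolding dA dF good_def using expand_bd[OF tzf' R(1,2) bf'] by blast
  have gdA': "good (fps_deriv A) \<tau>" by (rule good_mono[OF gdA tau0 tau(2)])
  have evdA: "ev av (fps_deriv A) T = ev av (fps_deriv f) (c + T)" if T: "av T < \<tau>" for T
    unfolding dA dF by (rule reexp[OF tzf' R(1,2), symmetric]) (use T tau in simp)
  define Lb where "Lb = fps_deriv A * (\<Sum>m<d. (expand_at av (C j m) b oo A) * (fps_const c + fps_X)^m)
                       - fps_const (of_nat j) * (fps_const c + fps_X)^(j - 1)"
  have gLb: "good Lb \<tau>" unfolding Lb_def
    by (intro good_diff good_sum good_mult good_power good_cX compgood CO tau0 gdA' good_const) auto
  have "Lb = 0"
  proof -
    obtain B where "bd Lb \<tau> B" using gLb good_def by blast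
    moreover have "ev av Lb T = 0" if T: "av T < \<tau>" for T
    proof -
      have gt: "good ((expand_at av (C j m) b oo A) * (fps_const c + fps_X)^m) \<tau>" if "m \<in> {..<d}" for m
        using that by (intro good_mult good_power good_cX compgood CO tau0) auto
      have gS: "good (\<Sum>m<d. (expand_at av (C j m) b oo A) * (fps_const c + fps_X)^m) \<tau>"
        by (rule good_sum[OF gt tau0])
      have "ev av Lb T = ev av (fps_deriv A * (\<Sum>m<d. (expand_at av (C j m) b oo A) * (fps_const c + fps_X)^m)) T
                 - ev av (fps_const (of_nat j) * (fps_const c + fps_X)^(j - 1)) T"
        unfolding Lb_def by (rule ev_diff_g[OF good_mult[OF gdA' gS tau0] _ T])
           (intro good_mult good_const good_power good_cX tau0)
      also have "\<dots> = ev av (fps_deriv A) T * (\<Sum>m<d. ev av ((expand_at av (C j m) b oo A) * (fps_const c + fps_X)^m) T)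
                 - of_nat j * (c + T)^(j - 1)"
        by (simp only: ev_mult_g[OF gdA' gS T] ev_sum_g[OF gt T] ev_term[OF good_const T] ev_const)
      also have "(\<Sum>m<d. ev av ((expand_at av (C j m) b oo A) * (fps_const c + fps_X)^m) T)
                 = (\<Sum>m<d. ev av (C j m) (ev av f (c + T)) * (c + T)^m)"
        by (intro sum.cong refl) (simp add: ev_term[OF compgood[OF CO] T] comp[OF CO T])
      finally have "ev av Lb T = ev av (fps_deriv f) (c + T) * (\<Sum>m<d. ev av (C j m) (ev av f (c + T)) * (c + T)^m)
                         - of_nat j * (c + T)^(j - 1)" by (simp only: evdA[OF T])
      also have "\<dots> = 0" using C xU[OF T] j by (simp add: is_conn_matrix_def)
      finally show ?thesis .
    qed
    ultimately show ?thesis using ident[OF _ tau(1) tau(1) _ pi] by blast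
  qed
  hence "fps_deriv A * (\<Sum>m<d. (expand_at av (C j m) b oo A) * (fps_const c + fps_X)^m)
         = of_nat j * (fps_const c + fps_X)^(j - 1)"
    by (simp add: Lb_def fps_of_nat)
  thus "(\<Sum>m<d. expand_at av (C j m) b * (fps_const c + fps_inv A)^m)
         = of_nat j * (fps_const c + fps_inv A)^(j - 1) * fps_deriv (fps_const c + fps_inv A)"
    by (rule formal_b[OF A0 A1])
qed

end


lemma deriv0_const:
  assumes ch: "\<And>n. n > 0 \<Longrightarrow> (of_nat n :: 'a::field) \<noteq> 0" and d: "fps_deriv f = (0 :: 'a fps)"
  shows "f = fps_const (f$0)"
proof (rule fps_ext)
  fix n show "f$n = fps_const (f$0) $ n"
  proof (cases n)
    case (Suc m)
    have "(fps_deriv f)$m = 0" using d by simp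
    hence "of_nat (Suc m) * f$(Suc m) = 0" by simp
    hence "f$(Suc m) = 0" using ch[of "Suc m"] by simp
    thus ?thesis using Suc by simp
  qed simp
qed

lemma prod_nth0: "(\<Prod>i\<in>S. f i)$0 = (\<Prod>i\<in>S. (f i)$0 :: 'a::comm_ring_1)"
  by (induct S rule: infinite_finite_induct) auto

lemma deriv_z:
  fixes u :: "'a::comm_ring_1 fps"
  assumes K: "\<And>i. i < d \<Longrightarrow> (\<Sum>m<d. Ct i m * u^m) = of_nat i * u^(i-1) * fps_deriv u"
  shows "fps_deriv (\<Sum>i<d. u^i * y i) = (\<Sum>m<d. u^m * (fps_deriv (y m) + (\<Sum>i<d. y i * Ct i m)))"
proof -
  have "fps_deriv (\<Sum>i<d. u^i * y i) = (\<Sum>i<d. fps_deriv (u^i) * y i + u^i * fps_deriv (y i))"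
    by (simp add: fps_deriv_sum algebra_simps)
  also have "\<dots> = (\<Sum>i<d. (\<Sum>m<d. Ct i m * u^m) * y i + u^i * fps_deriv (y i))"
  proof (rule sum.cong[OF refl])
    fix i assume "i \<in> {..<d}"
    hence "fps_deriv (u^i) = (\<Sum>m<d. Ct i m * u^m)" using K[of i] by (simp add: fps_deriv_power' mult_ac)
    thus "fps_deriv (u^i) * y i + u^i * fps_deriv (y i) = (\<Sum>m<d. Ct i m * u^m) * y i + u^i * fps_deriv (y i)"
      by simp
  qed
  also have "\<dots> = (\<Sum>i<d. \<Sum>m<d. u^m * (y i * Ct i m)) + (\<Sum>m<d. u^m * fps_deriv (y m))"
    by (simp add: sum.distrib sum_distrib_right sum_distrib_left mult_ac)
  also have "(\<Sum>i<d. \<Sum>m<d. u^m * (y i * Ct i m)) = (\<Sum>m<d. \<Sum>i<d. u^m * (y i * Ct i m))"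
    by (rule sum.swap)
  finally show ?thesis by (simp add: sum.distrib distrib_left sum_distrib_left)
qed

lemma recover:
  fixes u :: "nat \<Rightarrow> 'a::comm_ring_1"
  assumes V_inv: "\<forall>i<d. \<forall>j<d. (\<Sum>l<d. V i l * u l ^ j) = (if i = j then 1 else 0)" and k: "k < d"
  shows "E k = (\<Sum>l<d. V k l * (\<Sum>m<d. u l ^ m * E m))"
proof -
  have "(\<Sum>l<d. V k l * (\<Sum>m<d. u l ^ m * E m)) = (\<Sum>l<d. \<Sum>m<d. V k l * u l ^ m * E m)"
    by (simp add: sum_distrib_left mult_ac)
  also have "\<dots> = (\<Sum>m<d. \<Sum>l<d. V k l * u l ^ m * E m)" by (rule sum.swap)
  also have "\<dots> = (\<Sum>m<d. (\<Sum>l<d. V k l * u l ^ m) * E m)" by (simp add: sum_distrib_right)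
  also have "\<dots> = (\<Sum>m<d. (if k = m then 1 else 0) * E m)"
    using V_inv k by (intro sum.cong refl) simp
  also have "\<dots> = (\<Sum>m<d. if k = m then E m else 0)" by (intro sum.cong refl) simp
  also have "\<dots> = E k" using k by simp
  finally show ?thesis by simp
qed

context nak
begin

lemma ofnat_ne0:
  assumes p: "prime p" "av (of_nat p) = 1 / real p"
  shows "n > 0 \<Longrightarrow> (of_nat n :: 'k) \<noteq> 0"
proof (induct n rule: less_induct)
  case (less n)
  have p2: "p \<ge> 2" using p(1) by (simp add: prime_ge_2_nat)
  have p0: "(of_nat p :: 'k) \<noteq> 0"
  proof
    assume "(of_nat p :: 'k) = 0"
    hence "av (of_nat p :: 'k) = 0" by simp
    thus False using p(2) p2 by simp
  qed
  show ?case
  proof (cases "p dvd n")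
    case True
    then obtain m where m: "n = p * m" by (auto elim: dvdE)
    have "m > 0" "m < n" using m less(2) p2 by auto
    hence "(of_nat m :: 'k) \<noteq> 0" using less(1) by blast
    thus ?thesis using m p0 by simp
  next
    case False
    have "coprime p n" using p(1) False by (rule prime_imp_coprime)
    hence "gcd (int p) (int n) = 1" by (simp add: gcd_int_def)
    then obtain s t :: int where st: "s * int p + t * int n = 1" using bezout_int[of "int p" "int n"] by auto
    show ?thesis
    proof
      assume n0: "(of_nat n :: 'k) = 0"
      have "(of_int (s * int p + t * int n) :: 'k) = 1" using st by simp
      hence "(of_int s :: 'k) * of_nat p = 1" using n0 by simp
      hence "av (of_int s :: 'k) * (1 / real p) = 1" using p(2) by (metis av_1 av_mult)
      hence "av (of_int s :: 'k) = real p" using p2 by (simp add: field_simps)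
      thus False using av_of_int_le[of s] p2 by simp
    qed
  qed
qed

end



theorem corollary3p14:
  fixes av :: "'k::field \<Rightarrow> real" and cl :: bool and f :: "'k fps" and d :: nat
    and b :: 'k and a :: "nat \<Rightarrow> 'k" and P :: "nat \<Rightarrow> 'k fps"
    and C :: "nat \<Rightarrow> nat \<Rightarrow> 'k fps" and u :: "nat \<Rightarrow> 'k fps"
    and V :: "nat \<Rightarrow> nat \<Rightarrow> 'k fps"
  assumes k: "nonarch_field av"
    and phi: "finite_etale av cl f d"
    and b: "b \<in> udisc av cl"
    and fibre: "bij_betw a {..<d} {x \<in> udisc av cl. ev av f x = b}"
    and P: "is_min_poly av cl f d P"
    and u_root: "\<forall>i<d. fps_nth (u i) 0 = a i \<and>
                   (\<Sum>m<d. expand_at av (P m) b * u i ^ m) + u i ^ d = 0"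
    and V_inv: "\<forall>i<d. \<forall>j<d. (\<Sum>l<d. V i l * u l ^ j) = (if i = j then 1 else 0)"
    and inv_V: "\<forall>i<d. \<forall>j<d. (\<Sum>l<d. u i ^ l * V l j) = (if i = j then 1 else 0)"
    and C: "is_conn_matrix av cl f d C"
  shows "(\<forall>j<d. horizontal av d b C (\<lambda>i. V i j))
       \<and> (\<forall>c::nat \<Rightarrow> 'k. (\<forall>i<d. (\<Sum>j<d. fps_const (c j) * V i j) = 0) \<longrightarrow> (\<forall>j<d. c j = 0))
       \<and> (\<forall>y. horizontal av d b C y \<longrightarrow>
              (\<exists>c::nat \<Rightarrow> 'k. \<forall>i<d. y i = (\<Sum>j<d. fps_const (c j) * V i j)))"
proof -
  have isna: "is_nonarch_abs av" and compl: "\<forall>X. kcauchy av X \<longrightarrow> (\<exists>L. kconv av X L)"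
    using k by (auto simp: nonarch_field_def)
  obtain p :: nat where p: "prime p" "av (of_nat p) = 1 / real p" using k by (auto simp: nonarch_field_def)
  interpret nak av by (rule nak.intro[OF isna compl])
  have p2: "p \<ge> 2" using p(1) by (simp add: prime_ge_2_nat)
  have pi: "0 < av (of_nat p :: 'k)" "av (of_nat p :: 'k) < 1" using p(2) p2 by auto
  have ch: "\<And>n. n > 0 \<Longrightarrow> (of_nat n :: 'k) \<noteq> 0" by (rule ofnat_ne0[OF p])
  have aU: "a i \<in> udisc av cl" "ev av f (a i) = b" if "i < d" for i
    using bij_betw_apply[OF fibre, of i] that by auto
  have ainj: "inj_on a {..<d}" using fibre by (rule bij_betw_imp_inj_on)
  define A where "A i = expand_at av f (a i) - fps_const b" for i
  define r where "r i = fps_const (a i) + fps_inv (A i)" for i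
  have br: "A i $ 0 = 0" "A i $ 1 \<noteq> 0"
    "(\<Sum>m<d. expand_at av (P m) b * (r i)^m) + (r i)^d = 0"
    "\<And>j. j < d \<Longrightarrow> (\<Sum>m<d. expand_at av (C j m) b * (r i)^m) = of_nat j * (r i)^(j - 1) * fps_deriv (r i)"
    "\<exists>\<rho>>0. good (fps_inv (A i)) \<rho>"
    if i: "i < d" for i
    using branch[OF phi P C aU(1)[OF i] aU(2)[OF i, symmetric] pi] unfolding A_def r_def
    using aU(2)[OF i] by simp_all
  have r0: "(r i)$0 = a i" for i by (simp add: r_def fps_inv_0)
  have rinj: "inj_on r {..<d}"
  proof (rule inj_onI)
    fix i k assume "i \<in> {..<d}" "k \<in> {..<d}" "r i = r k"
    hence "a i = a k" using r0 by metis
    thus "i = k" using ainj \<open>i \<in> {..<d}\<close> \<open>k \<in> {..<d}\<close> by (auto dest: inj_onD)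
  qed
  have ur: "u i = r i" if i: "i < d" for i
  proof -
    define Q where "Q = mpoly d (\<lambda>m. expand_at av (P m) b)"
    have "\<exists>k<d. u i = r k"
    proof (rule roots_unique[of Q d r])
      show "Q \<noteq> 0" unfolding Q_def by (rule mpoly_ne)
      show "degree Q \<le> d" unfolding Q_def by (rule mpoly_degree)
      show "inj_on r {..<d}" by (rule rinj)
      show "\<And>k. k < d \<Longrightarrow> poly Q (r k) = 0" unfolding Q_def mpoly_poly using br(3) by blast
      show "poly Q (u i) = 0" unfolding Q_def mpoly_poly using u_root i by blast
    qed
    then obtain k where k: "k < d" "u i = r k" by blast
    have "a i = a k" using k u_root i r0 by metis
    hence "i = k" using ainj i k(1) by (auto dest: inj_onD)
    thus ?thesis using k by simp
  qed
  have K: "\<And>l j. l < d \<Longrightarrow> j < d \<Longrightarrow> (\<Sum>m<d. expand_at av (C j m) b * (u l)^m) = of_nat j * (u l)^(j - 1) * fps_deriv (u l)"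
    using br(4) ur by simp
  have u0: "(u i)$0 = a i" if "i < d" for i using u_root that by blast
  have "inj_on u {..<d} = inj_on r {..<d}" by (rule inj_on_cong) (simp add: ur)
  hence uinj: "inj_on u {..<d}" using rinj by simp
  have gu: "\<exists>\<rho>>0. good (u i) \<rho>" if i: "i < d" for i
  proof -
    obtain \<rho> where "\<rho> > 0" "good (fps_inv (A i)) \<rho>" using br(5)[OF i] by blast
    thus ?thesis using ur[OF i] by (auto simp: r_def intro!: exI[of _ \<rho>] good_add good_const)
  qed
  obtain \<rho>u where \<rho>u: "\<rho>u > 0" "\<forall>i\<in>{..<d}. good (u i) \<rho>u"
    using good_common[of "{..<d}" u] gu by auto
  have gV: "\<exists>\<rho>>0. good (V l j) \<rho>" if l: "l < d" and j: "j < d" for l j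
  proof -
    define D where "D = (\<Prod>m\<in>{..<d}-{j}. (u j - u m))"
    define N where "N = (\<Prod>m\<in>{..<d}-{j}. [:- u m, 1:])"
    have DV: "D * V l j = coeff N l" unfolding D_def N_def by (rule lagrange_V[OF uinj inv_V j l])
    have gD: "good D \<rho>u" unfolding D_def using \<rho>u j by (intro good_prod good_diff) auto
    have D0: "D$0 \<noteq> 0"
    proof -
      have "D$0 = (\<Prod>m\<in>{..<d}-{j}. (a j - a m))" unfolding D_def prod_nth0 using u0 j
        by (intro prod.cong refl) auto
      also have "\<dots> \<noteq> 0"
      proof -
        have "a j - a m \<noteq> 0" if "m \<in> {..<d} - {j}" for m
        proof
          assume "a j - a m = 0"
          hence "a j = a m" by simp
          hence "j = m" using inj_onD[OF ainj] that j by blast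
          thus False using that by simp
        qed
        thus ?thesis by (simp add: prod_zero_iff)
      qed
      finally show ?thesis .
    qed
    obtain \<rho>j where \<rho>j: "\<rho>j > 0" "good (inverse D) \<rho>j" using inverse_good[OF gD \<rho>u(1) D0] by blast
    have gN: "good (coeff N l) \<rho>u" unfolding N_def using \<rho>u by (intro good_coeff_prod) auto
    have VV: "inverse D * coeff N l = V l j"
      by (simp only: DV[symmetric] mult.assoc[symmetric] inverse_mult_eq_1[OF D0] mult_1_left)
    have m0: "0 \<le> min \<rho>u \<rho>j" using \<rho>j \<rho>u by simp
    have "good (inverse D * coeff N l) (min \<rho>u \<rho>j)"
      by (rule good_mult[OF good_mono[OF \<rho>j(2) m0] good_mono[OF gN m0] m0]) simp_all
    hence "good (V l j) (min \<rho>u \<rho>j)" by (simp only: VV)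
    moreover have "0 < min \<rho>u \<rho>j" using \<rho>j \<rho>u by simp
    ultimately show ?thesis by blast
  qed
  obtain \<rho>V where \<rho>V: "\<rho>V > 0" "\<forall>x\<in>{..<d} \<times> {..<d}. good (case x of (l, j) \<Rightarrow> V l j) \<rho>V"
    using good_common[of "{..<d} \<times> {..<d}" "\<lambda>x. case x of (l, j) \<Rightarrow> V l j"] gV by fastforce
  have convV: "conv_rad av (V l j) \<rho>V" if "l < d" "j < d" for l j
  proof -
    have "good (V l j) \<rho>V" using \<rho>V that by auto
    then obtain B where B: "bd (V l j) \<rho>V B" using good_def by blast
    show ?thesis unfolding conv_rad_def
    proof (intro allI impI)
      fix \<rho>' :: real assume "0 \<le> \<rho>' \<and> \<rho>' < \<rho>V"
      hence "tz (V l j) \<rho>'" using bd_tz[OF B] by blast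
      thus "(\<lambda>n. av (V l j $ n) * \<rho>' ^ n) \<longlonglongrightarrow> 0" by (simp add: tz_def)
    qed
  qed
  define E where "E y m = fps_deriv (y m) + (\<Sum>i<d. y i * expand_at av (C i m) b)" for y m
  have dz: "fps_deriv (\<Sum>i<d. u l ^ i * y i) = (\<Sum>m<d. u l ^ m * E y m)" if l: "l < d" for l y
    unfolding E_def by (rule deriv_z) (use K l in blast)
  have hor_iff: "horizontal av d b C y \<longleftrightarrow> (\<exists>r>0. \<forall>j<d. conv_rad av (y j) r) \<and> (\<forall>m<d. E y m = 0)" for y
    by (simp add: horizontal_def E_def)
  have part1: "horizontal av d b C (\<lambda>i. V i j)" if j: "j < d" for j
  proof -
    let ?y = "\<lambda>i. V i j"
    have z: "(\<Sum>m<d. u l ^ m * E ?y m) = 0" if l: "l < d" for l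
    proof -
      have "(\<Sum>i<d. u l ^ i * ?y i) = (if l = j then 1 else 0)" using inv_V l j by simp
      hence "fps_deriv (\<Sum>i<d. u l ^ i * ?y i) = 0" by simp
      thus ?thesis using dz[OF l] by simp
    qed
    have "E ?y m = 0" if m: "m < d" for m
      using recover[OF V_inv m, of "E ?y"] z by simp
    thus ?thesis unfolding hor_iff using convV j \<rho>V by blast
  qed
  have part2: "\<forall>j<d. c j = 0" if h: "\<forall>i<d. (\<Sum>j<d. fps_const (c j) * V i j) = 0" for c :: "nat \<Rightarrow> 'k"
  proof (intro allI impI)
    fix l assume l: "l < d"
    have "(\<Sum>i<d. u l ^ i * (\<Sum>j<d. fps_const (c j) * V i j)) = 0" using h by simp
    moreover have "(\<Sum>i<d. u l ^ i * (\<Sum>j<d. fps_const (c j) * V i j)) = (\<Sum>i<d. \<Sum>j<d. fps_const (c j) * (u l ^ i * V i j))"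
      by (simp add: sum_distrib_left mult.left_commute)
    moreover have "\<dots> = (\<Sum>j<d. \<Sum>i<d. fps_const (c j) * (u l ^ i * V i j))" by (rule sum.swap)
    moreover have "\<dots> = (\<Sum>j<d. fps_const (c j) * (\<Sum>i<d. u l ^ i * V i j))"
      by (simp add: sum_distrib_left)
    moreover have "\<dots> = (\<Sum>j<d. fps_const (c j) * (if l = j then 1 else 0))"
      using inv_V l by (intro sum.cong refl) simp
    moreover have "\<dots> = fps_const (c l)" using l by (simp add: if_distrib cong: if_cong)
    ultimately have "fps_const (c l) = 0" by simp
    thus "c l = 0" by simp
  qed
  have part3: "\<exists>c::nat \<Rightarrow> 'k. \<forall>i<d. y i = (\<Sum>j<d. fps_const (c j) * V i j)" if h: "horizontal av d b C y" for y
  proof -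
    have E0: "\<forall>m<d. E y m = 0" using h unfolding hor_iff by blast
    define z where "z l = (\<Sum>i<d. u l ^ i * y i)" for l
    have zc: "z l = fps_const ((z l)$0)" if l: "l < d" for l
    proof (rule deriv0_const[OF ch])
      show "fps_deriv (z l) = 0" unfolding z_def dz[OF l] using E0 by simp
    qed
    show ?thesis
    proof (intro exI allI impI)
      fix i assume i: "i < d"
      have "y i = (\<Sum>l<d. V i l * (\<Sum>m<d. u l ^ m * y m))" by (rule recover[OF V_inv i])
      also have "\<dots> = (\<Sum>l<d. V i l * z l)" by (simp add: z_def)
      also have "\<dots> = (\<Sum>l<d. fps_const ((z l)$0) * V i l)"
        using zc by (intro sum.cong refl) (metis lessThan_iff mult.commute)
      finally show "y i = (\<Sum>l<d. fps_const ((z l)$0) * V i l)" .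
    qed
  qed
  show ?thesis using part1 part2 part3 by blast
qed



end
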